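(* Let $d\ge 1$, $R>0$, $\Omega=(-R,R)^d$, and write points of $\mathbb{R}^d$ as ${\bf x}=(x_1,\dots,x_{d-1},z)$. Let $\Gamma^+=\{{\bf x}=(x_1,\dots,x_{d-1},R): |x_i|\le R,\ 1\le i\le d-1\}\subset\partial\Omega$. Let $\beta>1$, $r>R+1$ and $b>R+r$. Then there exist a number $\lambda_0=\lambda_0(\beta,r,R,b,d)$ and a constant $C=C(r,R,b,d)>0$, depending only on the listed parameters, such that for all $\lambda>\lambda_0$ and all $u\in C^2(\overline\Omega)$ with $u=0$ on $\partial\Omega$ and $u_z=0$ on $\Gamma^+$, \[ \int_\Omega e^{2\lambda (\frac{z+r}{b})^\beta}|\Delta u|^2\,d{\bf x}\ \ge\ C\lambda^3\beta^2(\beta-1)b^{-3\beta}(-R+r)^{2\beta}\int_\Omega e^{2\lambda(\frac{z+r}{b})^\beta}|u|^2\,d{\bf x}+C\lambda(\beta-1)b^{-\beta}\int_\Omega e^{2\lambda(\frac{z+r}{b})^\beta}|\nabla u|^2\,d{\bf x}. \]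
   Context: $u_z$ denotes the partial derivative of $u$ with respect to the last coordinate $z$. *)

theory Defs
  imports "HOL-Analysis.Analysis"
begin

text \<open>The open cube \<Omega> = (-R,R)^d in R^d, rendered as real^'n with d = CARD('n).\<close>
definition cube :: "real \<Rightarrow> (real^'n) set" where
  "cube R = box (\<chi> i. - R) (\<chi> i. R)"

text \<open>u \<in> C^2(closure S): u is twice differentiable on the open set S with gradient Du
  and Hessian D2u, and u, Du, D2u are continuous on closure S (i.e. u and its
  derivatives up to order 2 extend continuously to the closure).\<close>
definition C2_closure ::
  "(real^'n) set \<Rightarrow> (real^'n \<Rightarrow> real) \<Rightarrow> (real^'n \<Rightarrow> real^'n) \<Rightarrow> (real^'n \<Rightarrow> real^'n^'n) \<Rightarrow> bool" where
  "C2_closure S u Du D2u \<longleftrightarrow>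
     (\<forall>x\<in>S. (u has_derivative (\<lambda>h. Du x \<bullet> h)) (at x)) \<and>
     (\<forall>x\<in>S. (Du has_derivative (\<lambda>h. D2u x *v h)) (at x)) \<and>
     continuous_on (closure S) u \<and> continuous_on (closure S) Du \<and> continuous_on (closure S) D2u"

definition lap :: "(real^'n \<Rightarrow> real^'n^'n) \<Rightarrow> real^'n \<Rightarrow> real" where
  "lap D2u x = (\<Sum>i\<in>UNIV. D2u x $ i $ i)"

end

theory Submission
  imports Defs
begin

definition upd :: "real^'n \<Rightarrow> 'n \<Rightarrow> real \<Rightarrow> real^'n" where
  "upd x i t = (\<chi> j. if j = i then t else x $ j)"

lemma upd_nth [simp]: "upd x i t $ j = (if j = i then t else x $ j)"
  by (simp add: upd_def)

lemma upd_upd [simp]: "upd (upd x i s) i t = upd x i t"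
  by (simp add: vec_eq_iff)

lemma upd_same [simp]: "upd x i (x $ i) = x"
  by (simp add: vec_eq_iff)

lemma upd_line: "upd x i t = upd x i 0 + t *\<^sub>R axis i 1"
  by (simp add: vec_eq_iff axis_def)

lemma continuous_on_upd [continuous_intros]:
  assumes "continuous_on S f" "continuous_on S g"
  shows "continuous_on S (\<lambda>p. upd (f p) i (g p))"
proof -
  have "(\<lambda>p. upd (f p) i (g p)) = (\<lambda>p. f p - (f p $ i) *\<^sub>R axis i 1 + g p *\<^sub>R axis i 1)"
    by (auto simp: vec_eq_iff axis_def)
  moreover have "continuous_on S (\<lambda>p. f p - (f p $ i) *\<^sub>R axis i 1 + g p *\<^sub>R axis i 1)"
    using assms by (intro continuous_intros)
  ultimately show ?thesis by (simp only:)
qed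

definition swp :: "'n \<Rightarrow> (real^'n) \<times> real \<Rightarrow> (real^'n) \<times> real" where
  "swp k p = (upd (fst p) k (snd p), fst p $ k)"

lemma swp_swp [simp]: "swp k (swp k p) = p"
  by (simp add: swp_def)

lemma swp_image_cbox: "swp k ` cbox u v = cbox (swp k u) (swp k v)"
proof -
  have *: "swp k y \<in> cbox u v \<longleftrightarrow> y \<in> cbox (swp k u) (swp k v)" for y
  proof -
    obtain x t where y: "y = (x,t)" by fastforce
    obtain u1 u2 where u: "u = (u1,u2)" by fastforce
    obtain v1 v2 where v: "v = (v1,v2)" by fastforce
    show ?thesis
      unfolding y u v swp_def by (simp add: cbox_Pair_eq mem_box_cart) (metis)
  qed
  show ?thesis
  proof
    show "swp k ` cbox u v \<subseteq> cbox (swp k u) (swp k v)" using * by fastforce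
    show "cbox (swp k u) (swp k v) \<subseteq> swp k ` cbox u v"
      using * by (metis image_eqI subsetI swp_swp)
  qed
qed

lemma prodk: fixes f :: "'n::finite \<Rightarrow> real" shows "prod f UNIV = f k * prod f (UNIV - {k})"
  by (metis UNIV_I finite prod.remove)

lemma swp_content: "measure lborel (cbox (swp k u) (swp k v)) = measure lborel (cbox u v)"
proof (cases "cbox u v = {}")
  case True
  then have "cbox (swp k u) (swp k v) = {}" using swp_image_cbox[of k u v] by simp
  with True show ?thesis by simp
next
  case False
  obtain u1 u2 where u: "u = (u1,u2)" by fastforce
  obtain v1 v2 where v: "v = (v1,v2)" by fastforce
  from False have ne1: "cbox u1 v1 \<noteq> {}" and ne2: "u2 \<le> v2"
    by (auto simp: u v cbox_Pair_eq)
  then obtain x where "x \<in> cbox u1 v1" by blast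
  then have le: "\<And>i. u1 $ i \<le> v1 $ i" by (meson mem_box_cart order_trans)
  have "upd u1 k u2 \<in> cbox (upd u1 k u2) (upd v1 k v2)"
    using le ne2 by (simp add: mem_box_cart)
  then have ne1': "cbox (upd u1 k u2) (upd v1 k v2) \<noteq> {}" by blast
  have ne2': "u1 $ k \<le> v1 $ k" using le by simp
  have p1: "(\<Prod>i\<in>UNIV. v1 $ i - u1 $ i) = (v1 $ k - u1 $ k) * (\<Prod>i\<in>UNIV-{k}. v1 $ i - u1 $ i)"
    by (rule prodk)
  have p2: "(\<Prod>i\<in>UNIV. (if i = k then v2 else v1 $ i) - (if i = k then u2 else u1 $ i)) = (v2 - u2) * (\<Prod>i\<in>UNIV-{k}. v1 $ i - u1 $ i)"
    by (subst prodk[of _ k]) (auto intro!: prod.cong)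
  show ?thesis
    unfolding u v swp_def fst_conv snd_conv content_Pair content_cbox_cart[OF ne1] content_cbox_cart[OF ne1']
    using ne2 ne2' by (simp add: p1 p2 cbox_interval)
qed

lemma continuous_swp: "continuous (at p) (swp k)"
proof -
  have "continuous_on UNIV (swp k)"
    unfolding swp_def by (intro continuous_intros)
  then show ?thesis using continuous_on_eq_continuous_at open_UNIV by blast
qed

lemma slice_integral:
  fixes G :: "real^'n \<Rightarrow> real"
  assumes G: "continuous_on (cbox a b) G" and ab: "a $ k \<le> b $ k"
  shows "(b$k - a$k) * integral (cbox a b) G
       = integral (cbox a b) (\<lambda>x. integral {a$k..b$k} (\<lambda>t. G (upd x k t)))"
proof -
  let ?A = "(a, a$k)" and ?B = "(b, b$k)"
  have sA: "swp k ?A = ?A" and sB: "swp k ?B = ?B" by (simp_all add: swp_def)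
  have c1: "continuous_on (cbox ?A ?B) (\<lambda>p. G (fst p))"
    by (rule continuous_on_compose2[OF G]) (auto intro!: continuous_intros simp: cbox_Pair_eq)
  have c2: "continuous_on (cbox ?A ?B) (\<lambda>p. G (upd (fst p) k (snd p)))"
    by (rule continuous_on_compose2[OF G])
       (auto intro!: continuous_intros simp: cbox_Pair_eq mem_box_cart cbox_interval less_eq_vec_def)
  have "((\<lambda>p. G (fst p)) has_integral integral (cbox ?A ?B) (\<lambda>p. G (fst p))) (cbox ?A ?B)"
    using c1 integrable_continuous by blast
  then have "((\<lambda>p. G (fst (swp k p))) has_integral (1/1) *\<^sub>R integral (cbox ?A ?B) (\<lambda>p. G (fst p))) (swp k ` cbox ?A ?B)"
    apply (rule has_integral_twiddle[where g="swp k" and h="swp k" and r=1, rotated -1])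
    apply (simp_all only: swp_swp continuous_swp swp_image_cbox swp_content)
    apply (simp_all add: swp_image_cbox)
    apply (metis prod.collapse)+
    done
  then have "((\<lambda>p. G (fst (swp k p))) has_integral integral (cbox ?A ?B) (\<lambda>p. G (fst p))) (cbox ?A ?B)"
    by (simp only: swp_image_cbox sA sB) simp
  then have eq: "integral (cbox ?A ?B) (\<lambda>p. G (upd (fst p) k (snd p))) = integral (cbox ?A ?B) (\<lambda>p. G (fst p))"
    by (simp add: swp_def integral_unique)
  have "integral (cbox ?A ?B) (\<lambda>p. G (fst p)) = integral (cbox a b) (\<lambda>x. integral (cbox (a$k) (b$k)) (\<lambda>t. G x))"
    using integral_prod_continuous[OF c1] by simp
  also have "\<dots> = (b$k - a$k) * integral (cbox a b) G"
    using ab by (simp add: cbox_interval)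
  finally have 1: "integral (cbox ?A ?B) (\<lambda>p. G (fst p)) = (b$k - a$k) * integral (cbox a b) G" .
  have 2: "integral (cbox ?A ?B) (\<lambda>p. G (upd (fst p) k (snd p))) = integral (cbox a b) (\<lambda>x. integral {a$k..b$k} (\<lambda>t. G (upd x k t)))"
    using integral_prod_continuous[OF c2] by (simp add: cbox_interval)
  show ?thesis using eq 1 2 by simp
qed

lemma ibp:
  fixes F G :: "real^'n \<Rightarrow> real"
  assumes ab: "a$k \<le> b$k" and F: "continuous_on (cbox a b) F" and G: "continuous_on (cbox a b) G"
    and D: "\<And>x. x \<in> box a b \<Longrightarrow> ((\<lambda>t. F (upd x k t)) has_real_derivative G x) (at (x$k))"
  shows "(b$k - a$k) * integral (cbox a b) G
       = integral (cbox a b) (\<lambda>x. F (upd x k (b$k)) - F (upd x k (a$k)))"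
proof -
  have "integral (cbox a b) (\<lambda>x. integral {a$k..b$k} (\<lambda>t. G (upd x k t)))
      = integral (cbox a b) (\<lambda>x. F (upd x k (b$k)) - F (upd x k (a$k)))"
  proof (rule integral_spike[OF negligible_frontier_interval])
    fix x assume x: "x \<in> cbox a b - (cbox a b - box a b)"
    then have xb: "x \<in> box a b" by blast
    have "((\<lambda>t. G (upd x k t)) has_integral F (upd x k (b$k)) - F (upd x k (a$k))) {a$k..b$k}"
    proof (rule fundamental_theorem_of_calculus_interior[OF ab])
      show "continuous_on {a $ k..b $ k} (\<lambda>t. F (upd x k t))"
        apply (rule continuous_on_compose2[OF F])
        using xb by (auto intro!: continuous_intros simp: mem_box_cart less_imp_le)
    next
      fix t assume t: "t \<in> {a $ k<..<b $ k}"
      have yb: "upd x k t \<in> box a b" using xb t by (auto simp: mem_box_cart)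
      from D[OF yb] show "((\<lambda>t. F (upd x k t)) has_vector_derivative G (upd x k t)) (at t)"
        by (simp add: has_real_derivative_iff_has_vector_derivative)
    qed
    then show "F (upd x k (b$k)) - F (upd x k (a$k)) = integral {a$k..b$k} (\<lambda>t. G (upd x k t))"
      by (simp add: integral_unique)
  qed
  then show ?thesis using slice_integral[OF G ab] by simp
qed

lemma line_deriv:
  "((\<lambda>t. upd x i t) has_derivative (\<lambda>h. h *\<^sub>R axis i 1)) (at s)"
proof -
  have "((\<lambda>t. upd x i 0 + t *\<^sub>R axis i 1) has_derivative (\<lambda>h. h *\<^sub>R axis i 1)) (at s)"
    by (auto intro!: derivative_eq_intros)
  then show ?thesis by (subst upd_line) simp
qed

lemma pd_scalar:
  assumes "(f has_derivative (\<lambda>h. D \<bullet> h)) (at x)"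
  shows "((\<lambda>t. f (upd x i t)) has_real_derivative D $ i) (at (x$i))"
proof -
  have "((f \<circ> (\<lambda>t. upd x i t)) has_derivative ((\<lambda>h. D \<bullet> h) \<circ> (\<lambda>h. h *\<^sub>R axis i 1))) (at (x$i))"
    by (rule diff_chain_at[OF line_deriv]) (simp add: assms)
  moreover have "((\<lambda>h. D \<bullet> h) \<circ> (\<lambda>h. h *\<^sub>R axis i 1)) = (*) (D $ i)"
    by (auto simp: fun_eq_iff inner_axis)
  ultimately show ?thesis by (simp add: has_field_derivative_def o_def)
qed

lemma pd_vec:
  assumes "(f has_derivative (\<lambda>h. M *v h)) (at x)"
  shows "((\<lambda>t. f (upd x i t) $ j) has_real_derivative M $ j $ i) (at (x$i))"
proof -
  have "((f \<circ> (\<lambda>t. upd x i t)) has_derivative ((\<lambda>h. M *v h) \<circ> (\<lambda>h. h *\<^sub>R axis i 1))) (at (x$i))"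
    by (rule diff_chain_at[OF line_deriv]) (simp add: assms)
  then have "((\<lambda>t. (f \<circ> (\<lambda>t. upd x i t)) t $ j) has_derivative (\<lambda>h. (((\<lambda>h. M *v h) \<circ> (\<lambda>h. h *\<^sub>R axis i 1)) h) $ j)) (at (x$i))"
    by (rule bounded_linear.has_derivative[OF bounded_linear_vec_nth])
  moreover have "(\<lambda>h. (((\<lambda>h. M *v h) \<circ> (\<lambda>h. h *\<^sub>R axis i 1)) h) $ j) = (*) (M $ j $ i)"
    by (auto simp: fun_eq_iff matrix_vector_mult_scaleR matrix_vector_mult_basis column_def)
  ultimately show ?thesis by (simp add: has_field_derivative_def o_def)
qed

lemma pd_coord:
  assumes "(\<psi> has_real_derivative \<psi>' (x$k)) (at (x$k))"
  shows "((\<lambda>t. \<psi> (upd x i t $ k)) has_real_derivative (if i = k then \<psi>' (x$k) else 0)) (at (x$i))"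
  using assms by (cases "i = k") auto

lemma dline_scalar:
  assumes "(f has_derivative (\<lambda>h. D \<bullet> h)) (at (y + s *\<^sub>R v))"
  shows "((\<lambda>s. f (y + s *\<^sub>R v)) has_real_derivative D \<bullet> v) (at s)"
proof -
  have l: "((\<lambda>s. y + s *\<^sub>R v) has_derivative (\<lambda>h. h *\<^sub>R v)) (at s)"
    by (auto intro!: derivative_eq_intros)
  have "((f \<circ> (\<lambda>s. y + s *\<^sub>R v)) has_derivative ((\<lambda>h. D \<bullet> h) \<circ> (\<lambda>h. h *\<^sub>R v))) (at s)"
    by (rule diff_chain_at[OF l]) (simp add: assms)
  moreover have "((\<lambda>h. D \<bullet> h) \<circ> (\<lambda>h. h *\<^sub>R v)) = (*) (D \<bullet> v)"
    by (auto simp: fun_eq_iff)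
  ultimately show ?thesis by (simp add: has_field_derivative_def o_def)
qed

lemma dline_vec:
  assumes "(f has_derivative (\<lambda>h. M *v h)) (at (y + s *\<^sub>R v))"
  shows "((\<lambda>s. f (y + s *\<^sub>R v) $ j) has_real_derivative (M *v v) $ j) (at s)"
proof -
  have l: "((\<lambda>s. y + s *\<^sub>R v) has_derivative (\<lambda>h. h *\<^sub>R v)) (at s)"
    by (auto intro!: derivative_eq_intros)
  have "((f \<circ> (\<lambda>s. y + s *\<^sub>R v)) has_derivative ((\<lambda>h. M *v h) \<circ> (\<lambda>h. h *\<^sub>R v))) (at s)"
    by (rule diff_chain_at[OF l]) (simp add: assms)
  then have "((\<lambda>t. (f \<circ> (\<lambda>s. y + s *\<^sub>R v)) t $ j) has_derivative (\<lambda>h. (((\<lambda>h. M *v h) \<circ> (\<lambda>h. h *\<^sub>R v)) h) $ j)) (at s)"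
    by (rule bounded_linear.has_derivative[OF bounded_linear_vec_nth])
  moreover have "(\<lambda>h. (((\<lambda>h. M *v h) \<circ> (\<lambda>h. h *\<^sub>R v)) h) $ j) = (*) ((M *v v) $ j)"
    by (auto simp: fun_eq_iff matrix_vector_mult_scaleR)
  ultimately show ?thesis by (simp add: has_field_derivative_def o_def)
qed

lemma mvt_square:
  fixes w :: "real^'n \<Rightarrow> real"
  assumes h: "h > 0"
    and inS: "\<And>s t. 0 \<le> s \<Longrightarrow> s \<le> h \<Longrightarrow> 0 \<le> t \<Longrightarrow> t \<le> h \<Longrightarrow> x + s *\<^sub>R axis i 1 + t *\<^sub>R axis j 1 \<in> S"
    and Dw: "\<And>y. y \<in> S \<Longrightarrow> (w has_derivative (\<lambda>h. Dw y \<bullet> h)) (at y)"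
    and D2w: "\<And>y. y \<in> S \<Longrightarrow> (Dw has_derivative (\<lambda>h. D2w y *v h)) (at y)"
  shows "\<exists>s t. 0 < s \<and> s < h \<and> 0 < t \<and> t < h \<and>
     w (x + h *\<^sub>R axis i 1 + h *\<^sub>R axis j 1) - w (x + h *\<^sub>R axis i 1) - w (x + h *\<^sub>R axis j 1) + w x
       = h^2 * D2w (x + s *\<^sub>R axis i 1 + t *\<^sub>R axis j 1) $ i $ j"
proof -
  define P where "P s t = x + s *\<^sub>R axis i 1 + t *\<^sub>R axis j 1" for s t
  have P1: "P s t = (x + t *\<^sub>R axis j 1) + s *\<^sub>R axis i 1" for s t
    by (simp add: P_def algebra_simps)
  have P2: "P s t = (x + s *\<^sub>R axis i 1) + t *\<^sub>R axis j 1" for s t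
    by (simp add: P_def algebra_simps)
  define g where "g s = w (P s h) - w (P s 0)" for s
  have gd: "(g has_real_derivative (Dw (P s h) $ i - Dw (P s 0) $ i)) (at s)" if "0 \<le> s" "s \<le> h" for s
  proof -
    have a: "((\<lambda>s. w (P s h)) has_real_derivative Dw (P s h) $ i) (at s)"
      unfolding P1 using dline_scalar[OF Dw[OF inS[OF that, of h, folded P_def, unfolded P1]]] h
      by (simp add: inner_axis)
    have b: "((\<lambda>s. w (P s 0)) has_real_derivative Dw (P s 0) $ i) (at s)"
      unfolding P1 using dline_scalar[OF Dw[OF inS[OF that, of 0, folded P_def, unfolded P1]]] h
      by (simp add: inner_axis)
    show ?thesis unfolding g_def by (rule DERIV_diff[OF a b])
  qed
  obtain s where s: "0 < s" "s < h" and gs: "g h - g 0 = (h - 0) * (Dw (P s h) $ i - Dw (P s 0) $ i)"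
    using MVT2[OF h gd] by auto
  define m where "m t = Dw (P s t) $ i" for t
  have md: "(m has_real_derivative D2w (P s t) $ i $ j) (at t)" if "0 \<le> t" "t \<le> h" for t
  proof -
    have "(m has_real_derivative (D2w (P s t) *v axis j 1) $ i) (at t)"
      unfolding m_def P2 using dline_vec[OF D2w[OF inS[OF _ _ that, of s, folded P_def, unfolded P2]]] s
      by simp
    then show ?thesis by (simp add: matrix_vector_mult_basis column_def)
  qed
  obtain t where t: "0 < t" "t < h" and mt: "m h - m 0 = (h - 0) * D2w (P s t) $ i $ j"
    using MVT2[OF h md] by auto
  have "w (P h h) - w (P h 0) - w (P 0 h) + w (P 0 0) = h^2 * D2w (P s t) $ i $ j"
    using gs mt unfolding g_def m_def by (simp add: power2_eq_square algebra_simps)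
  then show ?thesis using s t unfolding P_def by auto
qed

lemma norm_two_axis:
  assumes "0 \<le> s" "0 \<le> t"
  shows "norm (s *\<^sub>R axis i (1::real) + t *\<^sub>R axis j 1) \<le> s + t"
proof -
  have "norm (s *\<^sub>R axis i (1::real) + t *\<^sub>R axis j 1) \<le> norm (s *\<^sub>R axis i (1::real)) + norm (t *\<^sub>R axis j (1::real))"
    by (rule norm_triangle_ineq)
  also have "\<dots> = s + t" using assms by simp
  finally show ?thesis .
qed

lemma tri_contra: fixes y a c :: real shows "\<bar>y - a\<bar> < \<bar>a - c\<bar> / 2 \<Longrightarrow> \<bar>y - c\<bar> < \<bar>a - c\<bar> / 2 \<Longrightarrow> False"
  by (simp add: abs_if split: if_split_asm)

lemma hessian_sym:
  fixes w :: "real^'n \<Rightarrow> real"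
  assumes S: "open S" and x: "x \<in> S"
    and Dw: "\<And>y. y \<in> S \<Longrightarrow> (w has_derivative (\<lambda>h. Dw y \<bullet> h)) (at y)"
    and D2w: "\<And>y. y \<in> S \<Longrightarrow> (Dw has_derivative (\<lambda>h. D2w y *v h)) (at y)"
    and cont: "continuous_on S D2w"
  shows "D2w x $ i $ j = D2w x $ j $ i"
proof (rule ccontr)
  assume ne: "D2w x $ i $ j \<noteq> D2w x $ j $ i"
  define e where "e = \<bar>D2w x $ i $ j - D2w x $ j $ i\<bar> / 2"
  have e: "e > 0" using ne by (simp add: e_def)
  have cx: "isCont D2w x" using cont S x continuous_on_eq_continuous_at by blast
  have c1: "isCont (\<lambda>y. D2w y $ i $ j) x" using cx by simp
  have c2: "isCont (\<lambda>y. D2w y $ j $ i) x" using cx by simp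
  obtain d1 where d1: "d1 > 0" "\<And>y. dist y x < d1 \<Longrightarrow> dist (D2w y $ i $ j) (D2w x $ i $ j) < e"
    using c1 e unfolding continuous_at_eps_delta by blast
  obtain d2 where d2: "d2 > 0" "\<And>y. dist y x < d2 \<Longrightarrow> dist (D2w y $ j $ i) (D2w x $ j $ i) < e"
    using c2 e unfolding continuous_at_eps_delta by blast
  obtain d0 where d0: "d0 > 0" "ball x d0 \<subseteq> S" using S x open_contains_ball by blast
  define h where "h = min d0 (min d1 d2) / 3"
  have h: "h > 0" using d0 d1 d2 by (simp add: h_def)
  have close: "dist (x + s *\<^sub>R axis a 1 + t *\<^sub>R axis b 1) x < min d0 (min d1 d2)"
    if "0 \<le> s" "s \<le> h" "0 \<le> t" "t \<le> h" for s t a b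
  proof -
    have "dist (x + s *\<^sub>R axis a 1 + t *\<^sub>R axis b 1) x = norm (s *\<^sub>R axis a (1::real) + t *\<^sub>R axis b 1)"
      by (simp add: dist_norm)
    also have "\<dots> \<le> s + t" using norm_two_axis that by blast
    also have "\<dots> < min d0 (min d1 d2)" using that h unfolding h_def by linarith
    finally show ?thesis .
  qed
  have inS: "x + s *\<^sub>R axis a 1 + t *\<^sub>R axis b 1 \<in> S"
    if "0 \<le> s" "s \<le> h" "0 \<le> t" "t \<le> h" for s t a b
    using close[OF that, of a b] d0 by (auto simp: dist_commute subset_iff)
  obtain s1 t1 where st1: "0 < s1" "s1 < h" "0 < t1" "t1 < h" and eq1:
    "w (x + h *\<^sub>R axis i 1 + h *\<^sub>R axis j 1) - w (x + h *\<^sub>R axis i 1) - w (x + h *\<^sub>R axis j 1) + w x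
       = h^2 * D2w (x + s1 *\<^sub>R axis i 1 + t1 *\<^sub>R axis j 1) $ i $ j"
    using mvt_square[where x=x and i=i and j=j, OF h inS Dw D2w] by blast
  obtain s2 t2 where st2: "0 < s2" "s2 < h" "0 < t2" "t2 < h" and eq2:
    "w (x + h *\<^sub>R axis j 1 + h *\<^sub>R axis i 1) - w (x + h *\<^sub>R axis j 1) - w (x + h *\<^sub>R axis i 1) + w x
       = h^2 * D2w (x + s2 *\<^sub>R axis j 1 + t2 *\<^sub>R axis i 1) $ j $ i"
    using mvt_square[where x=x and i=j and j=i, OF h inS Dw D2w] by blast
  have pt: "x + h *\<^sub>R axis j 1 + h *\<^sub>R axis i 1 = x + h *\<^sub>R axis i 1 + h *\<^sub>R axis j 1"
    by (simp add: algebra_simps)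
  have "h^2 * D2w (x + s1 *\<^sub>R axis i 1 + t1 *\<^sub>R axis j 1) $ i $ j
           = h^2 * D2w (x + s2 *\<^sub>R axis j 1 + t2 *\<^sub>R axis i 1) $ j $ i"
    using eq1 eq2[unfolded pt] by linarith
  then have eq: "D2w (x + s1 *\<^sub>R axis i 1 + t1 *\<^sub>R axis j 1) $ i $ j
           = D2w (x + s2 *\<^sub>R axis j 1 + t2 *\<^sub>R axis i 1) $ j $ i"
    using h by simp
  have a1: "\<bar>D2w (x + s1 *\<^sub>R axis i 1 + t1 *\<^sub>R axis j 1) $ i $ j - D2w x $ i $ j\<bar> < e"
  proof -
    have "dist (x + s1 *\<^sub>R axis i 1 + t1 *\<^sub>R axis j 1) x < d1" using close[of s1 t1 i j] st1 by auto
    then show ?thesis using d1(2) by (simp add: dist_real_def)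
  qed
  have a2: "\<bar>D2w (x + s2 *\<^sub>R axis j 1 + t2 *\<^sub>R axis i 1) $ j $ i - D2w x $ j $ i\<bar> < e"
  proof -
    have "dist (x + s2 *\<^sub>R axis j 1 + t2 *\<^sub>R axis i 1) x < d2" using close[of s2 t2 j i] st2 by auto
    then show ?thesis using d2(2) by (simp add: dist_real_def)
  qed
  show False using tri_contra a1 a2 eq unfolding e_def by metis
qed

lemma ftc_closure:
  fixes w :: "real^'n \<Rightarrow> real"
  assumes ab: "\<And>i. a$i < b$i"
    and cw: "continuous_on (cbox a b) w" and cDw: "continuous_on (cbox a b) Dw"
    and Dw: "\<And>x. x \<in> box a b \<Longrightarrow> (w has_derivative (\<lambda>h. Dw x \<bullet> h)) (at x)"
    and x: "x \<in> cbox a b" and tau: "tau \<in> {a$j..b$j}"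
  shows "w (upd x j tau) - w (upd x j (a$j)) = integral {a$j..tau} (\<lambda>s. Dw (upd x j s) $ j)"
proof -
  define \<Phi> where "\<Phi> y = w (upd y j tau) - w (upd y j (a$j)) - integral (cbox (a$j) tau) (\<lambda>s. Dw (upd y j s) $ j)" for y
  have "(\<chi> i. (a$i + b$i)/2) \<in> box a b" using ab by (simp add: mem_box_cart field_simps)
  then have ne: "box a b \<noteq> {}" by blast
  have int: "continuous_on (cbox a b) (\<lambda>y. integral (cbox (a$j) tau) (\<lambda>s. Dw (upd y j s) $ j))"
  proof (rule integral_continuous_on_param)
    have "continuous_on (cbox a b \<times> cbox (a$j) tau) (\<lambda>p. Dw (upd (fst p) j (snd p)))"
      apply (rule continuous_on_compose2[OF cDw])
      using tau by (auto intro!: continuous_intros simp: mem_box_cart cbox_interval less_eq_vec_def)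
    then show "continuous_on (cbox a b \<times> cbox (a$j) tau) (\<lambda>(y, s). Dw (upd y j s) $ j)"
      by (simp add: split_beta continuous_on_component)
  qed
  have c\<Phi>: "continuous_on (cbox a b) \<Phi>"
    unfolding \<Phi>_def
    apply (intro continuous_intros int)
    using tau ab by (auto intro!: continuous_on_compose2[OF cw] continuous_intros simp: mem_box_cart less_imp_le)
  have z: "\<Phi> y = 0" if y: "y \<in> box a b" for y
  proof -
    have ak: "a$j \<le> tau" using tau by simp
    have "((\<lambda>s. Dw (upd y j s) $ j) has_integral w (upd y j tau) - w (upd y j (a$j))) {a$j..tau}"
    proof (rule fundamental_theorem_of_calculus_interior[OF ak])
      show "continuous_on {a$j..tau} (\<lambda>s. w (upd y j s))"
        apply (rule continuous_on_compose2[OF cw])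
        using y tau by (auto intro!: continuous_intros simp: mem_box_cart less_imp_le)
    next
      fix s assume s: "s \<in> {a$j<..<tau}"
      have yb: "upd y j s \<in> box a b" using y s tau by (auto simp: mem_box_cart)
      from pd_scalar[OF Dw[OF yb], of j]
      show "((\<lambda>s. w (upd y j s)) has_vector_derivative Dw (upd y j s) $ j) (at s)"
        by (simp add: has_real_derivative_iff_has_vector_derivative)
    qed
    then show ?thesis unfolding \<Phi>_def by (simp add: integral_unique cbox_interval)
  qed
  have "\<Phi> x = 0"
    using continuous_constant_on_closure[of "box a b" \<Phi> 0 x] c\<Phi> z x closure_box[OF ne] by auto
  then show ?thesis unfolding \<Phi>_def by (simp add: cbox_interval)
qed

lemma tangential_zero:
  fixes w :: "real^'n \<Rightarrow> real"
  assumes ab: "\<And>i. a$i < b$i"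
    and cw: "continuous_on (cbox a b) w" and cDw: "continuous_on (cbox a b) Dw"
    and Dw: "\<And>x. x \<in> box a b \<Longrightarrow> (w has_derivative (\<lambda>h. Dw x \<bullet> h)) (at x)"
    and w0: "\<And>x. x \<in> cbox a b - box a b \<Longrightarrow> w x = 0"
    and x: "x \<in> cbox a b" and ij: "i \<noteq> j" and xi: "x$i = a$i \<or> x$i = b$i"
  shows "Dw x $ j = 0"
proof -
  define g where "g s = Dw (upd x j s) $ j" for s
  have xj: "x$j \<in> {a$j..b$j}" using x by (simp add: mem_box_cart)
  have cg: "continuous_on {a$j..b$j} g"
    unfolding g_def
    apply (rule continuous_on_component)
    apply (rule continuous_on_compose2[OF cDw])
    using x by (auto intro!: continuous_intros simp: mem_box_cart)
  have zero: "integral {a$j..u} g = 0" if u: "u \<in> {a$j..b$j}" for u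
  proof -
    have bd: "upd x j s \<in> cbox a b - box a b" if "s \<in> {a$j..b$j}" for s
      using x that xi ij by (auto simp: mem_box_cart)
    have "w (upd x j u) - w (upd x j (a$j)) = integral {a$j..u} g"
      unfolding g_def by (rule ftc_closure[OF ab cw cDw Dw x u])
    moreover have "w (upd x j u) = 0" using w0 bd u by blast
    moreover have "w (upd x j (a$j)) = 0" using w0 bd ab less_imp_le by fastforce
    ultimately show ?thesis by simp
  qed
  have d1: "((\<lambda>u. integral {a$j..u} g) has_vector_derivative g (x$j)) (at (x$j) within {a$j..b$j})"
    by (rule integral_has_vector_derivative[OF cg xj])
  have d2: "((\<lambda>u. integral {a$j..u} g) has_vector_derivative 0) (at (x$j) within {a$j..b$j})"
    by (rule has_vector_derivative_transform[OF xj, of _ "\<lambda>u. 0"]) (auto simp: zero)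
  have "g (x$j) = 0"
    using vector_derivative_unique_within_closed_interval[OF ab[of j], of "x$j"] d1 d2 xj
    by (simp add: cbox_interval)
  then show ?thesis by (simp add: g_def)
qed

lemma in_cube_coord:
  fixes x :: "real^'n"
  assumes "x \<in> cbox (\<chi> i. -R) (\<chi> i. R)"
  shows "-R \<le> x$k \<and> x$k \<le> R"
  using assms unfolding mem_box_cart by simp

lemma cont_coord:
  fixes f :: "real \<Rightarrow> real" and k :: "'n::finite"
  assumes "continuous_on {-R..R} f"
  shows "continuous_on (cbox (\<chi> i. -R) (\<chi> i. R)) (\<lambda>x::real^'n. f (x$k))"
  apply (rule continuous_on_compose2[OF assms])
  by (auto intro!: continuous_intros dest: in_cube_coord)

lemma cube_facts:
  fixes R :: real
  assumes R: "R > 0"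
  shows "closure (cube R :: (real^'a) set) = cbox (\<chi> i. -R) (\<chi> i. R)"
    and "frontier (cube R :: (real^'a) set) = cbox (\<chi> i. -R) (\<chi> i. R) - box (\<chi> i. -R) (\<chi> i. R)"
    and "(cube R :: (real^'a) set) = box (\<chi> i. -R) (\<chi> i. R)"
proof -
  have "(0::real^'a) \<in> box (\<chi> i. -R) (\<chi> i. R)" using R by (simp add: mem_box_cart)
  then have ne: "box (\<chi> i. -R) (\<chi> i. (R::real)) \<noteq> ({}::(real^'a) set)" by blast
  show "closure (cube R :: (real^'a) set) = cbox (\<chi> i. -R) (\<chi> i. R)"
    unfolding cube_def using closure_box[OF ne] by simp
  show "frontier (cube R :: (real^'a) set) = cbox (\<chi> i. -R) (\<chi> i. R) - box (\<chi> i. -R) (\<chi> i. R)"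
    unfolding cube_def frontier_def closure_box[OF ne] interior_open[OF open_box] by (rule refl)
  show "(cube R :: (real^'a) set) = box (\<chi> i. -R) (\<chi> i. R)" by (simp add: cube_def)
qed

lemma ibp_cube:
  fixes F G :: "real^'n \<Rightarrow> real"
  assumes R: "R > 0"
    and F: "continuous_on (cbox (\<chi> i. -R) (\<chi> i. R)) F" and G: "continuous_on (cbox (\<chi> i. -R) (\<chi> i. R)) G"
    and D: "\<And>x. x \<in> box (\<chi> i. -R) (\<chi> i. R) \<Longrightarrow> ((\<lambda>t. F (upd x k t)) has_real_derivative G x) (at (x$k))"
  shows "(2*R) * integral (cbox (\<chi> i. -R) (\<chi> i. R)) G
       = integral (cbox (\<chi> i. -R) (\<chi> i. R)) (\<lambda>x. F (upd x k R) - F (upd x k (-R)))"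
  using ibp[OF _ F G D] R by simp

lemma ibp_zero:
  fixes F G :: "real^'n \<Rightarrow> real"
  assumes R: "R > 0"
    and F: "continuous_on (cbox (\<chi> i. -R) (\<chi> i. R)) F" and G: "continuous_on (cbox (\<chi> i. -R) (\<chi> i. R)) G"
    and D: "\<And>x. x \<in> box (\<chi> i. -R) (\<chi> i. R) \<Longrightarrow> ((\<lambda>t. F (upd x k t)) has_real_derivative G x) (at (x$k))"
    and z: "\<And>x. x \<in> cbox (\<chi> i. -R) (\<chi> i. R) \<Longrightarrow> F (upd x k R) = 0 \<and> F (upd x k (-R)) = 0"
  shows "integral (cbox (\<chi> i. -R) (\<chi> i. R)) G = 0"
proof -
  have "integral (cbox (\<chi> i. -R) (\<chi> i. R)) (\<lambda>x. F (upd x k R) - F (upd x k (-R))) = 0"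
  proof -
    have "integral (cbox (\<chi> i. -R) (\<chi> i. R)) (\<lambda>x. F (upd x k R) - F (upd x k (-R))) = integral (cbox (\<chi> i. -R) (\<chi> i. R)) (\<lambda>x::real^'n. 0)"
      by (rule Henstock_Kurzweil_Integration.integral_cong) (use z in auto)
    then show ?thesis by simp
  qed
  then show ?thesis using ibp_cube[OF R F G D] R by simp
qed

lemma ibp_le:
  fixes F G :: "real^'n \<Rightarrow> real"
  assumes R: "R > 0"
    and F: "continuous_on (cbox (\<chi> i. -R) (\<chi> i. R)) F" and G: "continuous_on (cbox (\<chi> i. -R) (\<chi> i. R)) G"
    and D: "\<And>x. x \<in> box (\<chi> i. -R) (\<chi> i. R) \<Longrightarrow> ((\<lambda>t. F (upd x k t)) has_real_derivative G x) (at (x$k))"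
    and z: "\<And>x. x \<in> cbox (\<chi> i. -R) (\<chi> i. R) \<Longrightarrow> F (upd x k R) \<le> F (upd x k (-R))"
  shows "integral (cbox (\<chi> i. -R) (\<chi> i. R)) G \<le> 0"
proof -
  have c: "continuous_on (cbox (\<chi> i. -R) (\<chi> i. R)) (\<lambda>x. F (upd x k R) - F (upd x k (-R)))"
    by (intro continuous_intros continuous_on_compose2[OF F]) (auto simp: mem_box_cart intro!: continuous_intros less_imp_le[OF R])
  have "integral (cbox (\<chi> i. -R) (\<chi> i. R)) (\<lambda>x. F (upd x k R) - F (upd x k (-R))) \<le> integral (cbox (\<chi> i. -R) (\<chi> i. R)) (\<lambda>x::real^'n. 0)"
    by (rule Henstock_Kurzweil_Integration.integral_le[OF integrable_continuous[OF c]]) (auto simp: z)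
  then have "(2*R) * integral (cbox (\<chi> i. -R) (\<chi> i. R)) G \<le> 0" using ibp_cube[OF R F G D] by simp
  then show ?thesis using R by (simp add: mult_le_0_iff)
qed

lemma key_ineq:
  fixes ss tt vv ww pp qq dd nn :: real
  assumes t: "tt > 0" and c: "tt^2 + vv^2 / tt \<le> ss^2 * tt"
  shows "(-4* ss* pp* dd + 2* tt* nn) - 2*(tt* pp^2 + 2* ss* pp* qq) - 4*(tt*(pp^2 + nn) + tt* ww*(qq + dd) + vv* ww* pp)
           - 2*(3* ss^2* tt* ww^2 + 2* ss^3* ww* pp)
       \<le> (qq + dd - 2* ss* pp + (ss^2 - tt)* ww)^2 - (2* tt*(pp^2 + nn) + ss^2* tt* ww^2)"
proof -
  have eq: "(qq + dd - 2* ss* pp + (ss^2 - tt)* ww)^2 - (2* tt*(pp^2 + nn) + ss^2* tt* ww^2)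
      - ((-4* ss* pp* dd + 2* tt* nn) - 2*(tt* pp^2 + 2* ss* pp* qq) - 4*(tt*(pp^2 + nn) + tt* ww*(qq + dd) + vv* ww* pp)
           - 2*(3* ss^2* tt* ww^2 + 2* ss^3* ww* pp))
     = (qq + dd + ss^2* ww + tt* ww)^2 + (2* ss* pp + tt* ww)^2 + (2* tt* pp + vv* ww)^2 / tt + ww^2 * (ss^2* tt - (tt^2 + vv^2/tt))"
    using t by (simp add: field_simps power2_eq_square power3_eq_cube)
  have "0 \<le> (qq + dd + ss^2* ww + tt* ww)^2 + (2* ss* pp + tt* ww)^2 + (2* tt* pp + vv* ww)^2 / tt + ww^2 * (ss^2* tt - (tt^2 + vv^2/tt))"
    using t c by (intro add_nonneg_nonneg mult_nonneg_nonneg) auto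
  then show ?thesis using eq by linarith
qed

lemma DERIV_eq: "(f has_real_derivative a) F \<Longrightarrow> a = b \<Longrightarrow> (f has_real_derivative b) F"
  by simp

lemma carleman_w:
  fixes w :: "real^'n \<Rightarrow> real" and Dw :: "real^'n \<Rightarrow> real^'n" and D2w :: "real^'n \<Rightarrow> real^'n^'n"
    and k :: 'n and p1 p2 p3 :: "real \<Rightarrow> real"
  assumes R: "R > 0"
    and C2: "C2_closure (cube R) w Dw D2w"
    and w0: "\<forall>x\<in>frontier (cube R). w x = 0"
    and top: "\<forall>x\<in>closure (cube R). x$k = R \<longrightarrow> Dw x $ k = 0"
    and d1: "\<And>z. z \<in> {-R..R} \<Longrightarrow> (p1 has_real_derivative p2 z) (at z)"
    and d2: "\<And>z. z \<in> {-R..R} \<Longrightarrow> (p2 has_real_derivative p3 z) (at z)"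
    and c3: "continuous_on {-R..R} p3"
    and pos: "\<And>z. z \<in> {-R..R} \<Longrightarrow> p2 z > 0"
    and p1R: "p1 (-R) \<ge> 0"
    and cond: "\<And>z. z \<in> {-R..R} \<Longrightarrow> p2 z ^2 + p3 z ^2 / p2 z \<le> p1 z ^2 * p2 z"
  shows "integral (cbox (\<chi> i. -R) (\<chi> i. R)) (\<lambda>x. 2 * p2 (x$k) * (norm (Dw x))^2 + p1 (x$k)^2 * p2 (x$k) * (w x)^2)
       \<le> integral (cbox (\<chi> i. -R) (\<chi> i. R)) (\<lambda>x. (lap D2w x - 2 * p1 (x$k) * Dw x $ k + (p1 (x$k)^2 - p2 (x$k)) * w x)^2)"
proof -
  define K where "K = (cbox (\<chi> i. -R) (\<chi> i. R) :: (real^'n) set)"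
  define S where "S = (box (\<chi> i. -R) (\<chi> i. R) :: (real^'n) set)"
  have cl: "closure (cube R) = K" and fr: "frontier (cube R) = K - S" and cu: "cube R = S"
    using cube_facts[OF R] by (auto simp: K_def S_def)
  have SK: "S \<subseteq> K" unfolding S_def K_def by (rule box_subset_cbox)
  have dW: "\<And>x. x \<in> S \<Longrightarrow> (w has_derivative (\<lambda>h. Dw x \<bullet> h)) (at x)"
   and dD: "\<And>x. x \<in> S \<Longrightarrow> (Dw has_derivative (\<lambda>h. D2w x *v h)) (at x)"
   and cw: "continuous_on K w" and cDw: "continuous_on K Dw" and cD2w: "continuous_on K D2w"
    using C2 cl unfolding C2_closure_def cu by auto
  have cDwj: "\<And>j. continuous_on K (\<lambda>x. Dw x $ j)" using cDw by (intro continuous_intros)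
  have cD2: "\<And>i j. continuous_on K (\<lambda>x. D2w x $ i $ j)" using cD2w by (intro continuous_intros)
  have c1: "continuous_on {-R..R} p1" by (rule DERIV_continuous_on) (use d1 DERIV_subset in blast)
  have c2: "continuous_on {-R..R} p2" by (rule DERIV_continuous_on) (use d2 DERIV_subset in blast)
  have cp1: "continuous_on K (\<lambda>x. p1 (x$k))" unfolding K_def by (rule cont_coord[OF c1])
  have cp2: "continuous_on K (\<lambda>x. p2 (x$k))" unfolding K_def by (rule cont_coord[OF c2])
  have cp3: "continuous_on K (\<lambda>x. p3 (x$k))" unfolding K_def by (rule cont_coord[OF c3])
  have xkK: "x$k \<in> {-R..R}" if "x \<in> K" for x using in_cube_coord[of x R k] that by (simp add: K_def)
  have hsymS: "D2w x $ i $ j = D2w x $ j $ i" if "x \<in> S" for x i j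
    by (rule hessian_sym[OF _ that dW dD]) (auto simp: S_def intro: continuous_on_subset[OF cD2w SK[unfolded S_def]])
  have hsym: "D2w x $ i $ j = D2w x $ j $ i" if "x \<in> K" for x i j
  proof -
    have "0 \<in> S" using R by (simp add: S_def mem_box_cart)
    then have ne: "S \<noteq> {}" by blast
    have "closure S = K" unfolding S_def K_def using ne[unfolded S_def] by simp
    moreover have "continuous_on K (\<lambda>x. D2w x $ i $ j - D2w x $ j $ i)"
      by (rule continuous_on_diff[OF cD2[of i j] cD2[of j i]])
    ultimately show ?thesis
      using continuous_constant_on_closure[of S "\<lambda>x. D2w x $ i $ j - D2w x $ j $ i" 0 x] that hsymS
      by auto
  qed
  have wb: "w x = 0" if "x \<in> K - S" for x using w0 fr that by auto
  have tang: "Dw x $ j = 0" if "x \<in> K" "i \<noteq> j" "x$i = -R \<or> x$i = R" for x i j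
    by (rule tangential_zero[of "\<chi> i. -R" "\<chi> i. R" w Dw x i j])
       (use R that cw cDw dW wb in \<open>auto simp: K_def S_def\<close>)
  have updK: "upd x i c \<in> K - S" if "x \<in> K" "c = R \<or> c = -R" for x i c
    using that R by (auto simp: K_def S_def mem_box_cart)
  have updKK: "upd x i c \<in> K" if "x \<in> K" "c = R \<or> c = -R" for x i c
    using updK[OF that] by blast

  have pw: "((\<lambda>t. w (upd x i t)) has_real_derivative Dw x $ i) (at (x$i))" if "x \<in> S" for x i
    by (rule pd_scalar[OF dW[OF that]])
  have pp: "((\<lambda>t. Dw (upd x i t) $ j) has_real_derivative D2w x $ j $ i) (at (x$i))" if "x \<in> S" for x i j
    by (rule pd_vec[OF dD[OF that]])
  have ps1: "((\<lambda>t. p1 (upd x i t $ k)) has_real_derivative (if i = k then p2 (x$k) else 0)) (at (x$i))"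
    if "x \<in> S" for x i
  proof -
    have "x \<in> K" using that SK by blast
    from pd_coord[where \<psi>'=p2, OF d1[OF xkK[OF this]]] show ?thesis .
  qed
  have ps2: "((\<lambda>t. p2 (upd x i t $ k)) has_real_derivative (if i = k then p3 (x$k) else 0)) (at (x$i))"
    if "x \<in> S" for x i
  proof -
    have "x \<in> K" using that SK by blast
    from pd_coord[where \<psi>'=p3, OF d2[OF xkK[OF this]]] show ?thesis .
  qed

  note cints = cw cDw cD2w cDwj cD2 cp1 cp2 cp3

  define G1 where "G1 i x = p2 (x$k) * (Dw x $ i)^2 + p2 (x$k) * w x * D2w x $ i $ i
      + (if i = k then 1 else 0) * p3 (x$k) * w x * Dw x $ k" for i x
  have I1: "integral K (G1 i) = 0" for i
  proof -
    have "integral (cbox (\<chi> i. -R) (\<chi> i. R)) (G1 i) = 0"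
    proof (rule ibp_zero[OF R, where F="\<lambda>x. p2 (x$k) * w x * Dw x $ i" and k=i])
      show "continuous_on (cbox (\<chi> i. -R) (\<chi> i. R)) (\<lambda>x. p2 (x$k) * w x * Dw x $ i)"
        unfolding K_def[symmetric] by (intro continuous_intros cints)
      show "continuous_on (cbox (\<chi> i. -R) (\<chi> i. R)) (G1 i)"
        unfolding K_def[symmetric] G1_def by (intro continuous_intros cints)
    next
      fix x :: "real^'n" assume x: "x \<in> box (\<chi> i. -R) (\<chi> i. R)"
      then have xS: "x \<in> S" by (simp add: S_def)
      show "((\<lambda>t. p2 (upd x i t $ k) * w (upd x i t) * Dw (upd x i t) $ i) has_real_derivative G1 i x) (at (x$i))"
        by (rule DERIV_eq[OF DERIV_mult[OF DERIV_mult[OF ps2[OF xS] pw[OF xS]] pp[OF xS]]])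
           (auto simp: G1_def power2_eq_square algebra_simps)
    next
      fix x :: "real^'n" assume x: "x \<in> cbox (\<chi> i. -R) (\<chi> i. R)"
      then have "x \<in> K" by (simp add: K_def)
      then show "p2 (upd x i R $ k) * w (upd x i R) * Dw (upd x i R) $ i = 0 \<and>
                 p2 (upd x i (-R) $ k) * w (upd x i (-R)) * Dw (upd x i (-R)) $ i = 0"
        using wb updK by simp
    qed
    then show ?thesis by (simp add: K_def)
  qed

  define G2 where "G2 x = 3 * p1 (x$k)^2 * p2 (x$k) * (w x)^2 + 2 * p1 (x$k)^3 * w x * Dw x $ k" for x
  have I2: "integral K G2 = 0"
  proof -
    have "integral (cbox (\<chi> i. -R) (\<chi> i. R)) G2 = 0"
    proof (rule ibp_zero[OF R, where F="\<lambda>x. p1 (x$k) * p1 (x$k) * p1 (x$k) * w x * w x" and k=k])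
      show "continuous_on (cbox (\<chi> i. -R) (\<chi> i. R)) (\<lambda>x. p1 (x$k) * p1 (x$k) * p1 (x$k) * w x * w x)"
        unfolding K_def[symmetric] by (intro continuous_intros cints)
      show "continuous_on (cbox (\<chi> i. -R) (\<chi> i. R)) G2"
        unfolding K_def[symmetric] G2_def by (intro continuous_intros cints)
    next
      fix x :: "real^'n" assume x: "x \<in> box (\<chi> i. -R) (\<chi> i. R)"
      then have xS: "x \<in> S" by (simp add: S_def)
      show "((\<lambda>t. p1 (upd x k t $ k) * p1 (upd x k t $ k) * p1 (upd x k t $ k) * w (upd x k t) * w (upd x k t)) has_real_derivative G2 x) (at (x$k))"
        by (rule DERIV_eq[OF DERIV_mult[OF DERIV_mult[OF DERIV_mult[OF DERIV_mult[OF ps1[OF xS] ps1[OF xS]] ps1[OF xS]] pw[OF xS]] pw[OF xS]]])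
           (auto simp: G2_def power2_eq_square power3_eq_cube algebra_simps)
    next
      fix x :: "real^'n" assume x: "x \<in> cbox (\<chi> i. -R) (\<chi> i. R)"
      then have "x \<in> K" by (simp add: K_def)
      then show "p1 (upd x k R $ k) * p1 (upd x k R $ k) * p1 (upd x k R $ k) * w (upd x k R) * w (upd x k R) = 0 \<and>
                 p1 (upd x k (-R) $ k) * p1 (upd x k (-R) $ k) * p1 (upd x k (-R) $ k) * w (upd x k (-R)) * w (upd x k (-R)) = 0"
        using wb updK by simp
    qed
    then show ?thesis by (simp add: K_def)
  qed

  define G3 where "G3 i x = p1 (x$k) * (D2w x $ i $ i * Dw x $ k + Dw x $ i * D2w x $ k $ i)" for i x
  have I3: "integral K (G3 i) = 0" if ik: "i \<noteq> k" for i
  proof -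
    have "integral (cbox (\<chi> i. -R) (\<chi> i. R)) (G3 i) = 0"
    proof (rule ibp_zero[OF R, where F="\<lambda>x. p1 (x$k) * Dw x $ i * Dw x $ k" and k=i])
      show "continuous_on (cbox (\<chi> i. -R) (\<chi> i. R)) (\<lambda>x. p1 (x$k) * Dw x $ i * Dw x $ k)"
        unfolding K_def[symmetric] by (intro continuous_intros cints)
      show "continuous_on (cbox (\<chi> i. -R) (\<chi> i. R)) (G3 i)"
        unfolding K_def[symmetric] G3_def by (intro continuous_intros cints)
    next
      fix x :: "real^'n" assume x: "x \<in> box (\<chi> i. -R) (\<chi> i. R)"
      then have xS: "x \<in> S" by (simp add: S_def)
      show "((\<lambda>t. p1 (upd x i t $ k) * Dw (upd x i t) $ i * Dw (upd x i t) $ k) has_real_derivative G3 i x) (at (x$i))"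
        by (rule DERIV_eq[OF DERIV_mult[OF DERIV_mult[OF ps1[OF xS] pp[OF xS]] pp[OF xS]]])
           (use ik in \<open>auto simp: G3_def algebra_simps\<close>)
    next
      fix x :: "real^'n" assume x: "x \<in> cbox (\<chi> i. -R) (\<chi> i. R)"
      then have xK: "x \<in> K" by (simp add: K_def)
      have "Dw (upd x i c) $ k = 0" if "c = R \<or> c = -R" for c
        by (rule tang[of _ i]) (use updKK[OF xK that] ik that in auto)
      then show "p1 (upd x i R $ k) * Dw (upd x i R) $ i * Dw (upd x i R) $ k = 0 \<and>
                 p1 (upd x i (-R) $ k) * Dw (upd x i (-R)) $ i * Dw (upd x i (-R)) $ k = 0"
        by simp
    qed
    then show ?thesis by (simp add: K_def)
  qed

  define G4 where "G4 i x = p2 (x$k) * (Dw x $ i)^2 + 2 * p1 (x$k) * Dw x $ i * D2w x $ i $ k" for i x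
  have cG4: "continuous_on (cbox (\<chi> i. -R) (\<chi> i. R)) (G4 i)" for i
    unfolding K_def[symmetric] G4_def by (intro continuous_intros cints)
  have cF4: "continuous_on (cbox (\<chi> i. -R) (\<chi> i. R)) (\<lambda>x. p1 (x$k) * Dw x $ i * Dw x $ i)" for i
    unfolding K_def[symmetric] by (intro continuous_intros cints)
  have dF4: "((\<lambda>t. p1 (upd x k t $ k) * Dw (upd x k t) $ i * Dw (upd x k t) $ i) has_real_derivative G4 i x) (at (x$k))"
    if "x \<in> box (\<chi> i. -R) (\<chi> i. R)" for x i
  proof -
    have xS: "x \<in> S" using that by (simp add: S_def)
    show ?thesis
      by (rule DERIV_eq[OF DERIV_mult[OF DERIV_mult[OF ps1[OF xS] pp[OF xS]] pp[OF xS]]])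
         (auto simp: G4_def power2_eq_square algebra_simps)
  qed
  have I4: "integral K (G4 i) = 0" if ik: "i \<noteq> k" for i
  proof -
    have "integral (cbox (\<chi> i. -R) (\<chi> i. R)) (G4 i) = 0"
    proof (rule ibp_zero[OF R cF4 cG4 dF4])
      fix x :: "real^'n" assume x: "x \<in> cbox (\<chi> i. -R) (\<chi> i. R)"
      then have xK: "x \<in> K" by (simp add: K_def)
      have "Dw (upd x k c) $ i = 0" if "c = R \<or> c = -R" for c
        by (rule tang[of _ k]) (use updKK[OF xK that] ik that in auto)
      then show "p1 (upd x k R $ k) * Dw (upd x k R) $ i * Dw (upd x k R) $ i = 0 \<and>
                 p1 (upd x k (-R) $ k) * Dw (upd x k (-R)) $ i * Dw (upd x k (-R)) $ i = 0"
        by simp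
    qed
    then show ?thesis by (simp add: K_def)
  qed
  have I5: "integral K (G4 k) \<le> 0"
  proof -
    have "integral (cbox (\<chi> i. -R) (\<chi> i. R)) (G4 k) \<le> 0"
    proof (rule ibp_le[OF R cF4 cG4 dF4])
      fix x :: "real^'n" assume x: "x \<in> cbox (\<chi> i. -R) (\<chi> i. R)"
      then have xK: "x \<in> K" by (simp add: K_def)
      have "Dw (upd x k R) $ k = 0" using top cl updKK[OF xK] by auto
      moreover have "0 \<le> p1 (-R) * Dw (upd x k (-R)) $ k * Dw (upd x k (-R)) $ k"
        using p1R by (metis mult.assoc mult_nonneg_nonneg zero_le_square)
      ultimately show "p1 (upd x k R $ k) * Dw (upd x k R) $ k * Dw (upd x k R) $ k
          \<le> p1 (upd x k (-R) $ k) * Dw (upd x k (-R)) $ k * Dw (upd x k (-R)) $ k"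
        by simp
    qed
    then show ?thesis by (simp add: K_def)
  qed

  have cG1: "continuous_on K (G1 i)" for i unfolding G1_def by (intro continuous_intros cints)
  have cG2: "continuous_on K G2" unfolding G2_def by (intro continuous_intros cints)
  have cG3: "continuous_on K (G3 i)" for i unfolding G3_def by (intro continuous_intros cints)
  have cG4': "continuous_on K (G4 i)" for i using cG4 by (simp add: K_def)
  have iK: "continuous_on K f \<Longrightarrow> f integrable_on K" for f :: "real^'n \<Rightarrow> real"
    unfolding K_def by (rule integrable_continuous)
  have h1: "(G1 i has_integral 0) K" for i using integrable_integral[OF iK[OF cG1[of i]]] I1[of i] by simp
  have h2: "(G2 has_integral 0) K" using integrable_integral[OF iK[OF cG2]] I2 by simp
  have h3: "(G3 i has_integral 0) K" if "i \<in> UNIV - {k}" for i using integrable_integral[OF iK[OF cG3[of i]]] I3[of i] that by simp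
  have h4: "(G4 i has_integral 0) K" if "i \<in> UNIV - {k}" for i using integrable_integral[OF iK[OF cG4'[of i]]] I4[of i] that by simp
  have h5: "(G4 k has_integral integral K (G4 k)) K" using integrable_integral[OF iK[OF cG4'[of k]]] by simp
  define Gs where "Gs x = (\<Sum>i\<in>UNIV-{k}. -4 * G3 i x + 2 * G4 i x) - 2 * G4 k x - 4 * (\<Sum>i\<in>UNIV. G1 i x) - 2 * G2 x" for x
  have hA: "((\<lambda>x. \<Sum>i\<in>UNIV-{k}. -4 * G3 i x + 2 * G4 i x) has_integral 0) K"
  proof -
    have "((\<lambda>x. \<Sum>i\<in>UNIV-{k}. -4 * G3 i x + 2 * G4 i x) has_integral (\<Sum>i\<in>UNIV-{k}. -4 * 0 + 2 * 0)) K"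
      by (intro has_integral_sum has_integral_add has_integral_mult_right h3 h4) auto
    then show ?thesis by simp
  qed
  have hC: "((\<lambda>x. \<Sum>i\<in>UNIV. G1 i x) has_integral 0) K"
  proof -
    have "((\<lambda>x. \<Sum>i\<in>UNIV. G1 i x) has_integral (\<Sum>i\<in>UNIV. (0::real))) K"
      using has_integral_sum[of UNIV "\<lambda>i. G1 i" "\<lambda>i. 0" K] h1 by simp
    then show ?thesis by simp
  qed
  have hGs: "(Gs has_integral (0 - 2 * integral K (G4 k) - 4 * 0 - 2 * 0)) K"
    unfolding Gs_def
    by (intro has_integral_diff hA has_integral_mult_right h5 hC h2)
  have iGs: "integral K Gs \<ge> 0" using integral_unique[OF hGs] I5 by simp
  define LHS where "LHS x = 2 * p2 (x$k) * (norm (Dw x))^2 + p1 (x$k)^2 * p2 (x$k) * (w x)^2" for x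
  define RHS where "RHS x = (lap D2w x - 2 * p1 (x$k) * Dw x $ k + (p1 (x$k)^2 - p2 (x$k)) * w x)^2" for x
  have cLHS: "continuous_on K LHS" unfolding LHS_def by (intro continuous_intros cints)
  have clap: "continuous_on K (lap D2w)" unfolding lap_def by (intro continuous_intros cints)
  have cRHS: "continuous_on K RHS" unfolding RHS_def by (intro continuous_intros cints clap)
  have pt: "Gs x \<le> RHS x - LHS x" if xK: "x \<in> K" for x
  proof -
    define Dp where "Dp = (\<Sum>i\<in>UNIV-{k}. D2w x $ i $ i)"
    define N where "N = (\<Sum>i\<in>UNIV-{k}. (Dw x $ i)^2)"
    have lapx: "lap D2w x = D2w x $ k $ k + Dp"
      unfolding lap_def Dp_def by (rule prodk[where 'n='n] | simp add: sum.remove)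
    have sq: "(\<Sum>i\<in>UNIV. (Dw x $ i)^2) = (Dw x $ k)^2 + N"
      unfolding N_def by (simp add: sum.remove)
    have sd: "(\<Sum>i\<in>UNIV. D2w x $ i $ i) = D2w x $ k $ k + Dp"
      unfolding Dp_def by (simp add: sum.remove)
    have normx: "(norm (Dw x))^2 = (Dw x $ k)^2 + N"
      unfolding power2_norm_eq_inner inner_vec_def using sq by (simp add: power2_eq_square)
    have sA: "(\<Sum>i\<in>UNIV-{k}. -4 * G3 i x + 2 * G4 i x)
        = -4 * p1 (x$k) * Dw x $ k * Dp + 2 * p2 (x$k) * N"
    proof -
      have "(\<Sum>i\<in>UNIV-{k}. -4 * G3 i x + 2 * G4 i x)
          = (\<Sum>i\<in>UNIV-{k}. (-4 * p1 (x$k) * Dw x $ k) * D2w x $ i $ i + (2 * p2 (x$k)) * (Dw x $ i)^2)"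
        by (rule sum.cong) (auto simp: G3_def G4_def hsym[OF xK, of k] algebra_simps)
      also have "\<dots> = (\<Sum>i\<in>UNIV-{k}. (-4 * p1 (x$k) * Dw x $ k) * D2w x $ i $ i) + (\<Sum>i\<in>UNIV-{k}. (2 * p2 (x$k)) * (Dw x $ i)^2)"
        by (rule sum.distrib)
      also have "\<dots> = (-4 * p1 (x$k) * Dw x $ k) * Dp + (2 * p2 (x$k)) * N"
        unfolding Dp_def N_def by (simp only: sum_distrib_left)
      finally show ?thesis by simp
    qed
    have sC: "(\<Sum>i\<in>UNIV. G1 i x) = p2 (x$k) * ((Dw x $ k)^2 + N) + p2 (x$k) * w x * (D2w x $ k $ k + Dp)
                 + p3 (x$k) * w x * Dw x $ k"
    proof -
      have "(\<Sum>i\<in>UNIV. G1 i x) = p2 (x$k) * (\<Sum>i\<in>UNIV. (Dw x $ i)^2) + p2 (x$k) * w x * (\<Sum>i\<in>UNIV. D2w x $ i $ i)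
                 + (\<Sum>i\<in>UNIV. (if i = k then 1 else 0) * (p3 (x$k) * w x * Dw x $ k))"
        unfolding G1_def by (simp add: sum.distrib sum_distrib_left mult.assoc)
      moreover have "(\<Sum>i\<in>UNIV. (if i = k then 1 else 0) * c) = c" for c :: real
      proof -
        have "(\<Sum>i\<in>UNIV. (if i = k then 1 else 0) * c) = (\<Sum>i\<in>UNIV. if i = k then c else 0)"
          by (rule sum.cong) auto
        then show ?thesis by simp
      qed
      ultimately show ?thesis using sq sd by simp
    qed
    have t: "p2 (x$k) > 0" using pos xkK[OF xK] by blast
    have c: "p2 (x$k)^2 + p3 (x$k)^2 / p2 (x$k) \<le> p1 (x$k)^2 * p2 (x$k)" using cond xkK[OF xK] by blast
    from key_ineq[OF t c, of "Dw x $ k" Dp N "D2w x $ k $ k" "w x"]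
    show ?thesis
      unfolding Gs_def RHS_def LHS_def sA sC lapx normx
      by (simp add: G4_def G2_def)
  qed
  have "integral K Gs \<le> integral K (\<lambda>x. RHS x - LHS x)"
    by (rule Henstock_Kurzweil_Integration.integral_le[OF hGs[THEN has_integral_integrable] iK[OF continuous_on_diff[OF cRHS cLHS]]])
       (use pt in auto)
  then have "integral K LHS \<le> integral K RHS"
    using iGs Henstock_Kurzweil_Integration.integral_diff[OF iK[OF cRHS] iK[OF cLHS]] by simp
  then show ?thesis unfolding K_def LHS_def RHS_def .
qed

lemma has_derivative_eq_rhs': "(f has_derivative f') F \<Longrightarrow> f' = g' \<Longrightarrow> (f has_derivative g') F"
  by simp

lemma transform:
  fixes u :: "real^'n \<Rightarrow> real" and Du :: "real^'n \<Rightarrow> real^'n" and D2u :: "real^'n \<Rightarrow> real^'n^'n"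
    and k :: 'n and \<psi> p1 p2 :: "real \<Rightarrow> real"
  assumes R: "R > 0"
    and C2: "C2_closure (cube R) u Du D2u"
    and d0: "\<And>z. z \<in> {-R..R} \<Longrightarrow> (\<psi> has_real_derivative p1 z) (at z)"
    and d1: "\<And>z. z \<in> {-R..R} \<Longrightarrow> (p1 has_real_derivative p2 z) (at z)"
    and c2: "continuous_on {-R..R} p2"
  assumes E_def: "E = (\<lambda>x. exp (\<psi> (x$k)))"
    and w_def: "w = (\<lambda>x. E x * u x)"
    and Dw_def: "Dw = (\<lambda>x. E x *\<^sub>R (Du x + (p1 (x$k) * u x) *\<^sub>R axis k 1))"
    and D2w_def: "D2w = (\<lambda>x. \<chi> j. E x *\<^sub>R (D2u x $ j + p1 (x$k) *\<^sub>R (Du x $ j *\<^sub>R axis k 1 + (if j = k then 1 else 0) *\<^sub>R Du x)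
                    + ((if j = k then 1 else 0) * (p2 (x$k) + p1 (x$k)^2) * u x) *\<^sub>R axis k 1))"
  shows "C2_closure (cube R) w Dw D2w"
    and "\<And>x. lap D2w x - 2 * p1 (x$k) * Dw x $ k + (p1 (x$k)^2 - p2 (x$k)) * w x = E x * lap D2u x"
    and "\<And>x. Dw x $ k = E x * (Du x $ k + p1 (x$k) * u x)"
proof -
  define K where "K = (cbox (\<chi> i. -R) (\<chi> i. R) :: (real^'n) set)"
  define S where "S = (box (\<chi> i. -R) (\<chi> i. R) :: (real^'n) set)"
  have cl: "closure (cube R) = K" and cu: "cube R = S"
    using cube_facts[OF R] by (auto simp: K_def S_def)
  have SK: "S \<subseteq> K" unfolding S_def K_def by (rule box_subset_cbox)
  have dU: "\<And>x. x \<in> S \<Longrightarrow> (u has_derivative (\<lambda>h. Du x \<bullet> h)) (at x)"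
   and dD: "\<And>x. x \<in> S \<Longrightarrow> (Du has_derivative (\<lambda>h. D2u x *v h)) (at x)"
   and cu': "continuous_on K u" and cDu: "continuous_on K Du" and cD2u: "continuous_on K D2u"
    using C2 cl unfolding C2_closure_def cu by auto
  have xkK: "x$k \<in> {-R..R}" if "x \<in> K" for x using in_cube_coord[of x R k] that by (simp add: K_def)
  have c0: "continuous_on {-R..R} \<psi>" by (rule DERIV_continuous_on) (use d0 DERIV_subset in blast)
  have c1: "continuous_on {-R..R} p1" by (rule DERIV_continuous_on) (use d1 DERIV_subset in blast)
  have cp0: "continuous_on K (\<lambda>x. \<psi> (x$k))" unfolding K_def by (rule cont_coord[OF c0])
  have cp1: "continuous_on K (\<lambda>x. p1 (x$k))" unfolding K_def by (rule cont_coord[OF c1])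
  have cp2: "continuous_on K (\<lambda>x. p2 (x$k))" unfolding K_def by (rule cont_coord[OF c2])
  have cE: "continuous_on K E" unfolding E_def by (intro continuous_intros cp0)
  note cints = cu' cDu cD2u cp0 cp1 cp2 cE
  have hk: "((\<lambda>x::real^'n. x $ k) has_derivative (\<lambda>h. h $ k)) (at x)" for x
    by (rule bounded_linear_imp_has_derivative[OF bounded_linear_vec_nth])
  have dE: "(E has_derivative (\<lambda>h. h $ k * (E x * p1 (x$k)))) (at x)" if "x \<in> S" for x
  proof -
    have "x \<in> K" using that SK by blast
    then have "((\<lambda>z. exp (\<psi> z)) has_real_derivative exp (\<psi> (x$k)) * p1 (x$k)) (at (x$k))"
      using d0[OF xkK] by (auto intro!: derivative_eq_intros)
    from DERIV_compose_FDERIV[OF this hk]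
    show ?thesis unfolding E_def by simp
  qed
  have ax: "axis k 1 \<bullet> h = h $ k" for h :: "real^'n" by (simp add: inner_axis')
  have ax2: "axis k (1::real) $ i = (if i = k then 1 else 0)" for i by (simp add: axis_def)
  have C2w: "C2_closure (cube R) w Dw D2w"
    unfolding C2_closure_def cl[unfolded cu] cu
  proof (intro conjI ballI)
    fix x assume x: "x \<in> S"
    show "(w has_derivative (\<bullet>) (Dw x)) (at x)"
      unfolding w_def
      apply (rule has_derivative_eq_rhs'[OF has_derivative_mult[OF dE[OF x] dU[OF x]]])
      by (auto simp: fun_eq_iff Dw_def inner_add_left ax algebra_simps)
  next
    fix x assume x: "x \<in> S"
    have xK: "x \<in> K" using x SK by blast
    have dp1: "((\<lambda>x. p1 (x$k)) has_derivative (\<lambda>h. h $ k * p2 (x$k))) (at x)"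
      by (rule DERIV_compose_FDERIV[OF d1[OF xkK[OF xK]] hk])
    have dV: "((\<lambda>x. Du x + (p1 (x$k) * u x) *\<^sub>R axis k 1) has_derivative
        (\<lambda>h. D2u x *v h + (p1 (x$k) * (Du x \<bullet> h) + h $ k * p2 (x$k) * u x) *\<^sub>R axis k 1)) (at x)"
      by (rule has_derivative_eq_rhs'[OF has_derivative_add[OF dD[OF x] has_derivative_scaleR_left[OF has_derivative_mult[OF dp1 dU[OF x]]]]])
         (auto simp: fun_eq_iff algebra_simps)
    show "(Dw has_derivative (*v) (D2w x)) (at x)"
      unfolding Dw_def
      apply (rule has_derivative_eq_rhs'[OF has_derivative_scaleR[OF dE[OF x] dV]])
      by (auto simp: fun_eq_iff vec_eq_iff D2w_def matrix_vector_mul_component inner_add_left ax ax2 algebra_simps power2_eq_square)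
  next
    show "continuous_on K w" unfolding w_def by (intro continuous_intros cints)
    show "continuous_on K Dw" unfolding Dw_def by (intro continuous_intros cints)
    show "continuous_on K D2w" unfolding D2w_def by (intro continuous_intros cints)
  qed
  then show "C2_closure (cube R) w Dw D2w" .
  show dk: "Dw x $ k = E x * (Du x $ k + p1 (x$k) * u x)" for x
    by (simp add: Dw_def algebra_simps)
  show "lap D2w x - 2 * p1 (x$k) * Dw x $ k + (p1 (x$k)^2 - p2 (x$k)) * w x = E x * lap D2u x" for x
  proof -
    have "D2w x $ j $ j = E x * D2u x $ j $ j + (if j = k then E x * (2 * p1 (x$k) * Du x $ k + (p2 (x$k) + p1 (x$k)^2) * u x) else 0)" for j
      by (auto simp: D2w_def axis_def algebra_simps)
    then have "lap D2w x = E x * lap D2u x + E x * (2 * p1 (x$k) * Du x $ k + (p2 (x$k) + p1 (x$k)^2) * u x)"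
      unfolding lap_def by (simp add: sum.distrib sum_distrib_left)
    then show ?thesis by (simp add: dk w_def power2_eq_square algebra_simps)
  qed
qed

lemma weights:
  fixes R r b \<beta> lam :: real and \<psi> p1 p2 p3 :: "real \<Rightarrow> real"
  assumes R: "R > 0" and r: "r > R + 1" and b: "b > R + r" and \<beta>: "\<beta> > 1"
    and lam: "lam > 2 * b powr \<beta> / (r - R) powr \<beta>"
    and \<psi>_def: "\<psi> = (\<lambda>z. lam * b powr (-\<beta>) * (z + r) powr \<beta>)"
    and p1_def: "p1 = (\<lambda>z. lam * b powr (-\<beta>) * \<beta> * (z + r) powr \<beta> / (z + r))"
    and p2_def: "p2 = (\<lambda>z. lam * b powr (-\<beta>) * \<beta> * (\<beta> - 1) * (z + r) powr \<beta> / (z + r)^2)"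
    and p3_def: "p3 = (\<lambda>z. lam * b powr (-\<beta>) * \<beta> * (\<beta> - 1) * (\<beta> - 2) * (z + r) powr \<beta> / (z + r)^3)"
  shows "\<And>z. z \<in> {-R..R} \<Longrightarrow> (\<psi> has_real_derivative p1 z) (at z)"
    and "\<And>z. z \<in> {-R..R} \<Longrightarrow> (p1 has_real_derivative p2 z) (at z)"
    and "\<And>z. z \<in> {-R..R} \<Longrightarrow> (p2 has_real_derivative p3 z) (at z)"
    and "continuous_on {-R..R} p2"
    and "continuous_on {-R..R} p3"
    and "\<And>z. z \<in> {-R..R} \<Longrightarrow> p2 z > 0"
    and "p1 (-R) \<ge> 0"
    and "\<And>z. z \<in> {-R..R} \<Longrightarrow> p2 z ^2 + p3 z ^2 / p2 z \<le> p1 z ^2 * p2 z"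
    and "\<And>z. z \<in> {-R..R} \<Longrightarrow> lam * (\<beta> - 1) * b powr (-\<beta>) / (r + R) \<le> p2 z"
    and "\<And>z. z \<in> {-R..R} \<Longrightarrow> lam^3 * \<beta>^2 * (\<beta> - 1) * b powr (-3 * \<beta>) * (r - R) powr (2 * \<beta>) / (r + R)^3 \<le> p1 z ^2 * p2 z"
    and "\<And>z. z \<in> {-R..R} \<Longrightarrow> exp (2 * lam * ((z + r) / b) powr \<beta>) = exp (\<psi> z)^2"
proof -
  define d where "d = r - R"
  have d1: "d > 1" using r by (simp add: d_def)
  have bpos: "b > 0" using b R r by linarith
  have Dpos: "d powr \<beta> > 0" using d1 by simp
  have lam0: "lam > 0"
  proof -
    have "2 * b powr \<beta> / (r - R) powr \<beta> > 0" using bpos d1 by (simp add: d_def)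
    then show ?thesis using lam by linarith
  qed
  define K0 where "K0 = lam * b powr (-\<beta>)"
  have K0: "K0 > 0" using lam0 bpos by (simp add: K0_def)
  have cz: "z + r \<ge> d" "z + r \<le> r + R" "z + r > 1" "z + r > 0" if "z \<in> {-R..R}" for z
    using that d1 by (auto simp: d_def)
  have dQ: "((\<lambda>z. (z + r) powr \<beta>) has_real_derivative \<beta> * (z + r) powr \<beta> / (z + r)) (at z)"
    if "z + r > 0" for z
  proof -
    have "((\<lambda>z. (z + r) powr \<beta>) has_real_derivative \<beta> * (z + r) powr (\<beta> - 1) * 1) (at z)"
      by (rule DERIV_chain2[where f="\<lambda>y. y powr \<beta>" and g="\<lambda>z. z + r", OF has_real_derivative_powr[OF that, of \<beta>]])
         (auto intro!: derivative_eq_intros)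
    then show ?thesis using that by (simp add: powr_diff)
  qed
  show d0: "(\<psi> has_real_derivative p1 z) (at z)" if "z \<in> {-R..R}" for z
    unfolding \<psi>_def p1_def
    by (rule DERIV_eq[OF DERIV_cmult[OF dQ]]) (use cz[OF that] in auto)
  have dL1: "((\<lambda>z. z + r) has_real_derivative 1) (at z)" for z by (auto intro!: derivative_eq_intros)
  have dL2: "((\<lambda>z. (z + r)^2) has_real_derivative 2 * (z + r)) (at z)" for z by (auto intro!: derivative_eq_intros)
  have dL3: "((\<lambda>z. (z + r)^3) has_real_derivative 3 * (z + r)^2) (at z)" for z by (auto intro!: derivative_eq_intros)
  show "(p1 has_real_derivative p2 z) (at z)" if "z \<in> {-R..R}" for z
  proof -
    have pz: "z + r > 0" using cz[OF that] by simp
    define c where "c = z + r"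
    have c: "c > 0" using pz by (simp add: c_def)
    show ?thesis
      unfolding p1_def p2_def
      apply (rule DERIV_eq[OF DERIV_divide[OF DERIV_cmult[OF dQ[OF pz]] dL1]])
      using pz apply simp
      unfolding c_def[symmetric] using c by (simp add: field_simps power2_eq_square)
  qed
  show "(p2 has_real_derivative p3 z) (at z)" if "z \<in> {-R..R}" for z
  proof -
    have pz: "z + r > 0" using cz[OF that] by simp
    define c where "c = z + r"
    have c: "c > 0" using pz by (simp add: c_def)
    show ?thesis
      unfolding p2_def p3_def
      apply (rule DERIV_eq[OF DERIV_divide[OF DERIV_cmult[OF dQ[OF pz]] dL2]])
      using pz apply simp
      unfolding c_def[symmetric] using c by (simp add: field_simps power2_eq_square power3_eq_cube)
  qed
  have d2': "(p2 has_real_derivative p3 z) (at z)" if "z \<in> {-R..R}" for z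
  proof -
    have pz: "z + r > 0" using cz[OF that] by simp
    define c where "c = z + r"
    have c: "c > 0" using pz by (simp add: c_def)
    show ?thesis
      unfolding p2_def p3_def
      apply (rule DERIV_eq[OF DERIV_divide[OF DERIV_cmult[OF dQ[OF pz]] dL2]])
      using pz apply simp
      unfolding c_def[symmetric] using c by (simp add: field_simps power2_eq_square power3_eq_cube)
  qed
  show "continuous_on {-R..R} p2" by (rule DERIV_continuous_on) (use d2' DERIV_subset in blast)
  show "continuous_on {-R..R} p3"
  proof -
    have pos': "z + r \<noteq> 0" if "-R \<le> z" "z \<le> R" for z using that d1 unfolding d_def by linarith
    show ?thesis unfolding p3_def by (intro continuous_intros) (use pos' in auto)
  qed
  have bb: "b powr (-\<beta>) * b powr \<beta> = 1" using bpos by (simp add: powr_add[symmetric])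
  have lamD: "lam * d powr \<beta> > 2 * b powr \<beta>" using lam Dpos by (simp add: d_def pos_divide_less_eq)
  have K0D: "K0 * d powr \<beta> > 2"
  proof -
    have "K0 * d powr \<beta> = (lam * d powr \<beta>) * b powr (-\<beta>)" by (simp add: K0_def algebra_simps)
    also have "\<dots> > (2 * b powr \<beta>) * b powr (-\<beta>)" using lamD bpos by (intro mult_strict_right_mono) auto
    also have "(2 * b powr \<beta>) * b powr (-\<beta>) = 2" using bb by (simp add: algebra_simps)
    finally show ?thesis .
  qed
  have facts: "p1 z = K0 * \<beta> * Q / c \<and> p2 z = (\<beta> - 1) * (K0 * \<beta> * Q) / c^2 \<and> p3 z = (\<beta> - 1) * (\<beta> - 2) * (K0 * \<beta> * Q) / c^3
     \<and> c > 1 \<and> c \<ge> d \<and> c \<le> r + R \<and> Q \<ge> d powr \<beta> \<and> Q \<ge> c \<and> K0 * \<beta> * Q > 2 * \<beta>"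
    if z: "z \<in> {-R..R}" and cdef: "c = z + r" and Qdef: "Q = (z + r) powr \<beta>" for z c Q
  proof (intro conjI)
    show "p1 z = K0 * \<beta> * Q / c" "p2 z = (\<beta> - 1) * (K0 * \<beta> * Q) / c^2"
         "p3 z = (\<beta> - 1) * (\<beta> - 2) * (K0 * \<beta> * Q) / c^3"
      by (simp_all add: p1_def p2_def p3_def K0_def cdef Qdef algebra_simps)
    show c1: "c > 1" "c \<ge> d" "c \<le> r + R" using cz[OF z] by (simp_all add: cdef add.commute)
    show QD: "Q \<ge> d powr \<beta>" unfolding Qdef using cz[OF z] d1 \<beta> by (intro powr_mono2) auto
    have "c powr 1 \<le> c powr \<beta>" using c1 \<beta> by (intro powr_mono) auto
    then show "Q \<ge> c" using c1 by (simp add: Qdef cdef)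
    have "K0 * \<beta> * Q \<ge> K0 * \<beta> * d powr \<beta>" using QD K0 \<beta> by (intro mult_left_mono) auto
    moreover have "K0 * \<beta> * d powr \<beta> > 2 * \<beta>" using K0D \<beta> by (simp add: algebra_simps)
    ultimately show "K0 * \<beta> * Q > 2 * \<beta>" by linarith
  qed
  show pos2: "p2 z > 0" if "z \<in> {-R..R}" for z
  proof -
    obtain c Q where cQ: "c = z + r" "Q = (z + r) powr \<beta>" by blast
    note f = facts[OF that cQ]
    have X: "K0 * \<beta> * Q > 0" using f \<beta> by linarith
    have "(\<beta> - 1) * (K0 * \<beta> * Q) > 0" using X \<beta> by (simp only: zero_less_mult_iff) auto
    moreover have "c^2 > 0" using f by simp
    ultimately have "(\<beta> - 1) * (K0 * \<beta> * Q) / c^2 > 0" by (rule divide_pos_pos)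
    then show ?thesis using f by simp
  qed
  show "p1 (-R) \<ge> 0"
  proof -
    have z: "-R \<in> {-R..R}" using R by simp
    obtain c Q where cQ: "c = -R + r" "Q = (-R + r) powr \<beta>" by blast
    note f = facts[OF z cQ]
    have "K0 * \<beta> * Q > 0" using f \<beta> by linarith
    then show ?thesis using f by simp
  qed
  show "p2 z ^2 + p3 z ^2 / p2 z \<le> p1 z ^2 * p2 z" if z: "z \<in> {-R..R}" for z
  proof -
    obtain c Q where cQ: "c = z + r" "Q = (z + r) powr \<beta>" by blast
    note f = facts[OF z cQ]
    define X where "X = K0 * \<beta> * Q"
    have X: "X > 2 * \<beta>" using f by (simp add: X_def)
    have c: "c > 0" using f by linarith
    define m where "m = (\<beta> - 1) * X / c^4"
    have m: "m \<ge> 0" using X \<beta> c by (simp add: m_def)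
    have q1: "p1 z = X / c" and q2: "p2 z = (\<beta> - 1) * X / c^2" and q3: "p3 z = (\<beta> - 1) * (\<beta> - 2) * X / c^3"
      using f by (simp_all add: X_def)
    have Xp: "X \<noteq> 0" "\<beta> - 1 \<noteq> 0" using X \<beta> by auto
    have e1: "p2 z ^2 + p3 z ^2 / p2 z = m * ((\<beta> - 1) * X + (\<beta> - 2)^2)"
      unfolding q2 q3 m_def using Xp c
      by (simp add: field_simps eval_nat_numeral)
    have e2: "p1 z ^2 * p2 z = m * X^2"
      unfolding q1 q2 m_def using Xp c
      by (simp add: field_simps eval_nat_numeral)
    have "X * (X - \<beta> + 1) \<ge> (2 * \<beta>) * (\<beta> + 1)"
      using X \<beta> by (intro mult_mono) auto
    then have h1: "X*X - X*\<beta> + X \<ge> 2*\<beta>*\<beta> + 2*\<beta>" by (simp add: algebra_simps)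
    have h2: "\<beta>*\<beta> \<ge> \<beta>*1" using \<beta> by (intro mult_left_mono) auto
    have "(\<beta> - 1) * X + (\<beta> - 2)^2 = X*\<beta> - X + \<beta>*\<beta> - 4*\<beta> + 4" by (simp add: power2_eq_square algebra_simps)
    moreover have "X^2 = X*X" by (simp add: power2_eq_square)
    ultimately have "(\<beta> - 1) * X + (\<beta> - 2)^2 \<le> X^2" using h1 h2 \<beta> by linarith
    then show ?thesis unfolding e1 e2 using m by (intro mult_left_mono)
  qed
  show "lam * (\<beta> - 1) * b powr (-\<beta>) / (r + R) \<le> p2 z" if z: "z \<in> {-R..R}" for z
  proof -
    obtain c Q where cQ: "c = z + r" "Q = (z + r) powr \<beta>" by blast
    note f = facts[OF z cQ]
    have c: "c > 0" using f by linarith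
    have "1 / (r + R) \<le> 1 / c" using f c by (intro divide_left_mono) auto
    also have "1 / c = c / c^2" using c by (simp add: power2_eq_square)
    also have "\<dots> \<le> \<beta> * Q / c^2" using f \<beta> c
      by (intro divide_right_mono) (auto intro: order_trans[of _ Q] simp: mult_le_cancel_right1)
    finally have "1 / (r + R) \<le> \<beta> * Q / c^2" .
    then have ineq: "K0 * (\<beta> - 1) * (1 / (r + R)) \<le> K0 * (\<beta> - 1) * (\<beta> * Q / c^2)"
      using K0 \<beta> by (intro mult_left_mono) auto
    have e2: "p2 z = K0 * (\<beta> - 1) * (\<beta> * Q / c^2)" using f by (simp add: algebra_simps)
    have e1: "lam * (\<beta> - 1) * b powr (-\<beta>) / (r + R) = K0 * (\<beta> - 1) * (1 / (r + R))"
      by (simp add: K0_def)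
    show ?thesis unfolding e1 e2 by (rule ineq)
  qed
  show "lam^3 * \<beta>^2 * (\<beta> - 1) * b powr (-3 * \<beta>) * (r - R) powr (2 * \<beta>) / (r + R)^3 \<le> p1 z ^2 * p2 z"
    if z: "z \<in> {-R..R}" for z
  proof -
    obtain c Q where cQ: "c = z + r" "Q = (z + r) powr \<beta>" by blast
    note f = facts[OF z cQ]
    have c: "c > 0" using f by linarith
    define D where "D = d powr \<beta>"
    have D: "D > 0" using Dpos by (simp add: D_def)
    have pb: "b powr (-3 * \<beta>) = b powr (-\<beta>) * b powr (-\<beta>) * b powr (-\<beta>)"
    proof -
      have "-3 * \<beta> = -\<beta> + -\<beta> + -\<beta>" by simp
      then show ?thesis by (simp only: powr_add)
    qed
    have pd: "(r - R) powr (2 * \<beta>) = D * D"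
    proof -
      have "2 * \<beta> = \<beta> + \<beta>" by simp
      then show ?thesis by (simp only: powr_add D_def d_def)
    qed
    have A1: "lam^3 * \<beta>^2 * (\<beta> - 1) * b powr (-3 * \<beta>) * (r - R) powr (2 * \<beta>) = K0^3 * \<beta>^2 * (\<beta> - 1) * D^2"
      unfolding pb pd K0_def by (simp add: power2_eq_square power3_eq_cube algebra_simps)
    have q1: "p1 z = K0 * \<beta> * Q / c" and q2: "p2 z = (\<beta> - 1) * (K0 * \<beta> * Q) / c^2" using f by simp_all
    have P: "p1 z ^2 * p2 z = K0^3 * \<beta>^2 * (\<beta> - 1) * (\<beta> * Q^3 / c^4)"
      unfolding q1 q2 using c by (simp add: field_simps eval_nat_numeral)
    have QD: "D \<le> Q" using f by (simp add: D_def)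
    have "D^2 / (r + R)^3 \<le> Q^2 / c^3"
    proof (rule frac_le)
      show "0 \<le> Q^2" by simp
      show "D^2 \<le> Q^2" using QD D by (intro power_mono) auto
      show "0 < c^3" using c by simp
      show "c^3 \<le> (r + R)^3" using f c by (intro power_mono) auto
    qed
    also have "Q^2 / c^3 \<le> \<beta> * Q^3 / c^4"
    proof -
      have "Q^2 / c^3 = Q^2 * c / c^4" using c by (simp add: field_simps eval_nat_numeral)
      also have "\<dots> \<le> Q^2 * Q / c^4" using f c by (intro divide_right_mono mult_left_mono) auto
      also have "\<dots> \<le> \<beta> * Q^3 / c^4" using \<beta> c f
        by (intro divide_right_mono) (auto simp: power2_eq_square power3_eq_cube intro!: mult_right_mono[of 1 \<beta>, simplified])
      finally show ?thesis .
    qed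
    finally have "D^2 / (r + R)^3 \<le> \<beta> * Q^3 / c^4" .
    then have "K0^3 * \<beta>^2 * (\<beta> - 1) * (D^2 / (r + R)^3) \<le> K0^3 * \<beta>^2 * (\<beta> - 1) * (\<beta> * Q^3 / c^4)"
      using K0 \<beta> by (intro mult_left_mono) auto
    then show ?thesis unfolding A1 P by simp
  qed
  show "exp (2 * lam * ((z + r) / b) powr \<beta>) = exp (\<psi> z)^2" if z: "z \<in> {-R..R}" for z
  proof -
    have "((z + r) / b) powr \<beta> = (z + r) powr \<beta> * b powr (-\<beta>)"
      using cz[OF z] bpos by (simp add: powr_divide powr_minus_divide)
    then have "2 * lam * ((z + r) / b) powr \<beta> = 2 * \<psi> z" by (simp add: \<psi>_def algebra_simps)
    then show ?thesis by (metis exp_double)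
  qed
qed

lemma main_fixed:
  fixes R r b \<beta> lam C :: real and k :: "'n::finite" and u :: "real^'n \<Rightarrow> real" and Du :: "real^'n \<Rightarrow> real^'n"
    and D2u :: "real^'n \<Rightarrow> real^'n^'n"
  assumes R: "R > 0" and r: "r > R + 1" and b: "b > R + r" and \<beta>: "\<beta> > 1"
    and lam: "lam > 2 * b powr \<beta> / (r - R) powr \<beta>"
    and Cpos: "C > 0" and C1: "4 * C \<le> 1 / (r + R)" and C2: "2 * C \<le> 1 / (r + R)^3"
    and H1: "C2_closure (cube R) u Du D2u"
    and H2: "\<forall>x\<in>frontier (cube R). u x = 0"
    and H3: "\<forall>x\<in>closure (cube R). x $ k = R \<longrightarrow> Du x $ k = 0"
  shows "integral (cube R) (\<lambda>x. exp (2 * lam * ((x $ k + r) / b) powr \<beta>) * \<bar>lap D2u x\<bar>^2)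
       \<ge> C * lam^3 * \<beta>^2 * (\<beta> - 1) * b powr (-3 * \<beta>) * (r - R) powr (2 * \<beta>)
            * integral (cube R) (\<lambda>x. exp (2 * lam * ((x $ k + r) / b) powr \<beta>) * \<bar>u x\<bar>^2)
         + C * lam * (\<beta> - 1) * b powr (- \<beta>)
            * integral (cube R) (\<lambda>x. exp (2 * lam * ((x $ k + r) / b) powr \<beta>) * norm (Du x)^2)"
proof -
  define \<psi> where "\<psi> = (\<lambda>z. lam * b powr (-\<beta>) * (z + r) powr \<beta>)"
  define p1 where "p1 = (\<lambda>z. lam * b powr (-\<beta>) * \<beta> * (z + r) powr \<beta> / (z + r))"
  define p2 where "p2 = (\<lambda>z. lam * b powr (-\<beta>) * \<beta> * (\<beta> - 1) * (z + r) powr \<beta> / (z + r)^2)"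
  define p3 where "p3 = (\<lambda>z. lam * b powr (-\<beta>) * \<beta> * (\<beta> - 1) * (\<beta> - 2) * (z + r) powr \<beta> / (z + r)^3)"
  note W = weights[OF R r b \<beta> lam \<psi>_def p1_def p2_def p3_def]
  define E where "E = (\<lambda>x::real^'n. exp (\<psi> (x$k)))"
  define w where "w = (\<lambda>x. E x * u x)"
  define Dw where "Dw = (\<lambda>x. E x *\<^sub>R (Du x + (p1 (x$k) * u x) *\<^sub>R axis k 1))"
  define D2w where "D2w = (\<lambda>x. \<chi> j. E x *\<^sub>R (D2u x $ j + p1 (x$k) *\<^sub>R (Du x $ j *\<^sub>R axis k 1 + (if j = k then 1 else 0) *\<^sub>R Du x)
                    + ((if j = k then 1 else 0) * (p2 (x$k) + p1 (x$k)^2) * u x) *\<^sub>R axis k 1))"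
  note T = transform[OF R H1 W(1) W(2) W(4) E_def w_def Dw_def D2w_def]
  define K where "K = (cbox (\<chi> i. -R) (\<chi> i. R) :: (real^'n) set)"
  define S where "S = (box (\<chi> i. -R) (\<chi> i. R) :: (real^'n) set)"
  have cl: "closure (cube R) = K" and fr: "frontier (cube R) = K - S" and cu: "cube R = S"
    using cube_facts[OF R] by (auto simp: K_def S_def)
  have xkK: "x$k \<in> {-R..R}" if "x \<in> K" for x using in_cube_coord[of x R k] that by (simp add: K_def)
  have w0: "\<forall>x\<in>frontier (cube R). w x = 0" using H2 by (simp add: w_def)
  have top: "\<forall>x\<in>closure (cube R). x$k = R \<longrightarrow> Dw x $ k = 0"
  proof (intro ballI impI)
    fix x assume x: "x \<in> closure (cube R)" and xk: "x$k = R"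
    have "x \<notin> S" using xk by (auto simp: S_def mem_box_cart)
    then have "x \<in> frontier (cube R)" using x cl fr by auto
    then have "u x = 0" using H2 by blast
    moreover have "Du x $ k = 0" using H3 x xk by blast
    ultimately show "Dw x $ k = 0" using T(3) by simp
  qed
  have CW: "integral K (\<lambda>x. 2 * p2 (x$k) * (norm (Dw x))^2 + p1 (x$k)^2 * p2 (x$k) * (w x)^2)
       \<le> integral K (\<lambda>x. (lap D2w x - 2 * p1 (x$k) * Dw x $ k + (p1 (x$k)^2 - p2 (x$k)) * w x)^2)"
    unfolding K_def by (rule carleman_w[OF R T(1) w0 top W(2) W(3) W(5) W(6) W(7) W(8)])

  have SK: "S \<subseteq> K" unfolding S_def K_def by (rule box_subset_cbox)
  have cu': "continuous_on K u" and cDu: "continuous_on K Du" and cD2u: "continuous_on K D2u"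
    using H1 cl unfolding C2_closure_def cu by auto
  have c0: "continuous_on {-R..R} \<psi>" by (rule DERIV_continuous_on) (use W(1) DERIV_subset in blast)
  have cE: "continuous_on K E" unfolding E_def K_def
    by (intro continuous_intros cont_coord[OF c0])
  have Epos: "E x > 0" for x by (simp add: E_def)
  have Wt: "exp (2 * lam * ((x $ k + r) / b) powr \<beta>) = E x ^2" if "x \<in> K" for x
    using W(11)[OF xkK[OF that]] by (simp add: E_def)
  have icube: "integral (cube R) f = integral K f" for f :: "real^'n \<Rightarrow> real"
    by (simp add: cu S_def K_def integral_open_interval)
  define U1 where "U1 x = E x ^2 * (u x)^2" for x
  define U2 where "U2 x = E x ^2 * (norm (Du x))^2" for x
  have T2: "lap D2w x - 2 * p1 (x$k) * Dw x $ k + (p1 (x$k)^2 - p2 (x$k)) * w x = E x * lap D2u x" for x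
    using T(2) by simp
  have eqL: "integral K (\<lambda>x. exp (2 * lam * ((x $ k + r) / b) powr \<beta>) * \<bar>lap D2u x\<bar>^2)
      = integral K (\<lambda>x. (lap D2w x - 2 * p1 (x$k) * Dw x $ k + (p1 (x$k)^2 - p2 (x$k)) * w x)^2)"
    unfolding T2 by (rule Henstock_Kurzweil_Integration.integral_cong) (simp add: Wt power_mult_distrib)
  have eqU: "integral K (\<lambda>x. exp (2 * lam * ((x $ k + r) / b) powr \<beta>) * \<bar>u x\<bar>^2) = integral K U1"
    by (rule Henstock_Kurzweil_Integration.integral_cong) (simp add: Wt U1_def)
  have eqD: "integral K (\<lambda>x. exp (2 * lam * ((x $ k + r) / b) powr \<beta>) * norm (Du x)^2) = integral K U2"
    by (rule Henstock_Kurzweil_Integration.integral_cong) (simp add: Wt U2_def)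
  define A1 where "A1 = lam^3 * \<beta>^2 * (\<beta> - 1) * b powr (-3 * \<beta>) * (r - R) powr (2 * \<beta>)"
  define A2 where "A2 = lam * (\<beta> - 1) * b powr (-\<beta>)"
  have lam0: "lam > 0"
  proof -
    have "2 * b powr \<beta> / (r - R) powr \<beta> > 0" using b R r by simp
    then show ?thesis using lam by linarith
  qed
  have A1: "A1 \<ge> 0" unfolding A1_def using lam0 \<beta> by simp
  have A2: "A2 \<ge> 0" unfolding A2_def using lam0 \<beta> by simp
  have pt: "C * A1 * U1 x + C * A2 * U2 x \<le> 2 * p2 (x$k) * (norm (Dw x))^2 + p1 (x$k)^2 * p2 (x$k) * (w x)^2"
    if xK: "x \<in> K" for x
  proof -
    define s where "s = p1 (x$k)"
    define t where "t = p2 (x$k)"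
    define T2 where "T2 = s^2 * t"
    define P where "P = (norm (Dw x))^2"
    define Y where "Y = U2 x"
    define Z where "Z = U1 x"
    have t: "t \<ge> 0" using W(6)[OF xkK[OF xK]] by (simp add: t_def)
    have P: "P \<ge> 0" and Y: "Y \<ge> 0" and Z: "Z \<ge> 0" by (simp_all add: P_def Y_def Z_def U1_def U2_def)
    have tb: "4 * C * A2 \<le> t"
    proof -
      have "4 * C * A2 \<le> (1 / (r + R)) * A2" using C1 A2 by (intro mult_right_mono) auto
      also have "\<dots> \<le> t" using W(9)[OF xkK[OF xK]] by (simp add: t_def A2_def)
      finally show ?thesis .
    qed
    have sb: "2 * C * A1 \<le> T2"
    proof -
      have "2 * C * A1 \<le> (1 / (r + R)^3) * A1" using C2 A1 by (intro mult_right_mono) auto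
      also have "\<dots> \<le> T2" using W(10)[OF xkK[OF xK]] by (simp add: T2_def s_def t_def A1_def)
      finally show ?thesis .
    qed
    have YP: "Y \<le> 2 * P + 2 * s^2 * Z"
    proof -
      have eq: "E x *\<^sub>R Du x = Dw x - (E x * s * u x) *\<^sub>R axis k 1"
        by (simp add: Dw_def s_def scaleR_add_right)
      have "norm (E x *\<^sub>R Du x) \<le> norm (Dw x) + norm ((E x * s * u x) *\<^sub>R axis k (1::real))"
        unfolding eq by (rule norm_triangle_ineq4)
      moreover have "\<bar>E x\<bar> = E x" using Epos[of x] by simp
      ultimately have n1: "E x * norm (Du x) \<le> norm (Dw x) + \<bar>E x * s * u x\<bar>" by simp
      have "(E x * norm (Du x))^2 \<le> (norm (Dw x) + \<bar>E x * s * u x\<bar>)^2"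
        using n1 Epos[of x] by (intro power_mono) auto
      also have "\<dots> \<le> 2 * (norm (Dw x))^2 + 2 * \<bar>E x * s * u x\<bar>^2"
        using sum_squares_bound[of "norm (Dw x)" "\<bar>E x * s * u x\<bar>"] by (simp add: power2_eq_square algebra_simps)
      finally show ?thesis by (simp add: Y_def P_def Z_def U1_def U2_def power_mult_distrib algebra_simps)
    qed
    have i1: "C * A2 * Y \<le> (t/4) * Y" using tb Y by (intro mult_right_mono) auto
    have i2: "(t/4) * Y \<le> (t/4) * (2 * P + 2 * s^2 * Z)" using YP t by (intro mult_left_mono) auto
    have i2': "(t/4) * (2 * P + 2 * s^2 * Z) = t * P / 2 + T2 * Z / 2" by (simp add: T2_def algebra_simps)
    have i3: "C * A1 * Z \<le> (T2/2) * Z" using sb Z by (intro mult_right_mono) auto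
    have i4: "t * P \<ge> 0" using t P by simp
    have "C * A1 * Z + C * A2 * Y \<le> 2 * t * P + T2 * Z" using i1 i2 i2' i3 i4 by linarith
    moreover have "(w x)^2 = Z" by (simp add: w_def Z_def U1_def power_mult_distrib)
    ultimately show ?thesis by (simp add: Y_def Z_def P_def T2_def s_def t_def)
  qed
  have cU1: "continuous_on K U1" unfolding U1_def by (intro continuous_intros cE cu')
  have cU2: "continuous_on K U2" unfolding U2_def by (intro continuous_intros cE cDu)
  have iK: "continuous_on K f \<Longrightarrow> f integrable_on K" for f :: "real^'n \<Rightarrow> real"
    unfolding K_def by (rule integrable_continuous)
  have hL: "((\<lambda>x. C * A1 * U1 x + C * A2 * U2 x) has_integral (C * A1 * integral K U1 + C * A2 * integral K U2)) K"
    by (intro has_integral_add has_integral_mult_right integrable_integral iK cU1 cU2)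
  have c2: "continuous_on {-R..R} p2" by (rule W(4))
  have c1: "continuous_on {-R..R} p1" by (rule DERIV_continuous_on) (use W(2) DERIV_subset in blast)
  have cDw: "continuous_on K Dw" and cw: "continuous_on K w"
    using T(1) cl unfolding C2_closure_def cu by auto
  have cM: "continuous_on K (\<lambda>x. 2 * p2 (x$k) * (norm (Dw x))^2 + p1 (x$k)^2 * p2 (x$k) * (w x)^2)"
    unfolding K_def by (intro continuous_intros cont_coord[OF c1] cont_coord[OF c2] cDw[unfolded K_def] cw[unfolded K_def])
  have "C * A1 * integral K U1 + C * A2 * integral K U2
      \<le> integral K (\<lambda>x. 2 * p2 (x$k) * (norm (Dw x))^2 + p1 (x$k)^2 * p2 (x$k) * (w x)^2)"
    using Henstock_Kurzweil_Integration.integral_le[OF hL[THEN has_integral_integrable] iK[OF cM] pt]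
      integral_unique[OF hL] by simp
  also note CW
  finally have fin: "C * A1 * integral K U1 + C * A2 * integral K U2
      \<le> integral K (\<lambda>x. exp (2 * lam * ((x $ k + r) / b) powr \<beta>) * \<bar>lap D2u x\<bar>^2)"
    using eqL by simp
  show ?thesis
    unfolding icube eqU eqD using fin by (simp add: A1_def A2_def mult.assoc)
qed

theorem theorem3p1:
  fixes R r b :: real
  assumes "R > 0" and "r > R + 1" and "b > R + r"
  shows "\<exists>C>0. \<forall>\<beta>>1. \<exists>lam0. \<forall>lam>lam0. \<forall>(k::'n::finite) (u::real^'n \<Rightarrow> real) Du D2u.
     C2_closure (cube R) u Du D2u \<and>
     (\<forall>x\<in>frontier (cube R). u x = 0) \<and>
     (\<forall>x\<in>closure (cube R). x $ k = R \<longrightarrow> Du x $ k = 0) \<longrightarrow>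
     integral (cube R) (\<lambda>x. exp (2 * lam * ((x $ k + r) / b) powr \<beta>) * \<bar>lap D2u x\<bar>^2)
       \<ge> C * lam^3 * \<beta>^2 * (\<beta> - 1) * b powr (-3 * \<beta>) * (r - R) powr (2 * \<beta>)
            * integral (cube R) (\<lambda>x. exp (2 * lam * ((x $ k + r) / b) powr \<beta>) * \<bar>u x\<bar>^2)
         + C * lam * (\<beta> - 1) * b powr (- \<beta>)
            * integral (cube R) (\<lambda>x. exp (2 * lam * ((x $ k + r) / b) powr \<beta>) * norm (Du x)^2)"
proof -
  define C where "C = min (1 / (4 * (r + R))) (1 / (2 * (r + R)^3))"
  have rR: "r + R > 0" using assms by linarith
  have Cpos: "C > 0" using rR by (simp add: C_def)
  have C1: "4 * C \<le> 1 / (r + R)"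
  proof -
    have "C \<le> 1 / (4 * (r + R))" by (simp add: C_def)
    then show ?thesis using rR by (simp add: field_simps)
  qed
  have C2: "2 * C \<le> 1 / (r + R)^3"
  proof -
    have "C \<le> 1 / (2 * (r + R)^3)" by (simp add: C_def)
    then show ?thesis using rR by (simp add: field_simps)
  qed
  show ?thesis
  proof (rule exI[of _ C], intro conjI allI impI)
    show "C > 0" by (rule Cpos)
  next
    fix \<beta> :: real assume \<beta>: "\<beta> > 1"
    show "\<exists>lam0. \<forall>lam>lam0. \<forall>(k::'n) (u::real^'n \<Rightarrow> real) Du D2u.
     C2_closure (cube R) u Du D2u \<and>
     (\<forall>x\<in>frontier (cube R). u x = 0) \<and>
     (\<forall>x\<in>closure (cube R). x $ k = R \<longrightarrow> Du x $ k = 0) \<longrightarrow>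
     integral (cube R) (\<lambda>x. exp (2 * lam * ((x $ k + r) / b) powr \<beta>) * \<bar>lap D2u x\<bar>^2)
       \<ge> C * lam^3 * \<beta>^2 * (\<beta> - 1) * b powr (-3 * \<beta>) * (r - R) powr (2 * \<beta>)
            * integral (cube R) (\<lambda>x. exp (2 * lam * ((x $ k + r) / b) powr \<beta>) * \<bar>u x\<bar>^2)
         + C * lam * (\<beta> - 1) * b powr (- \<beta>)
            * integral (cube R) (\<lambda>x. exp (2 * lam * ((x $ k + r) / b) powr \<beta>) * norm (Du x)^2)"
    proof (rule exI[of _ "2 * b powr \<beta> / (r - R) powr \<beta>"], intro allI impI)
      fix lam :: real and k :: 'n and u :: "real^'n \<Rightarrow> real" and Du D2u
      assume lam: "lam > 2 * b powr \<beta> / (r - R) powr \<beta>"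
        and H: "C2_closure (cube R) u Du D2u \<and> (\<forall>x\<in>frontier (cube R). u x = 0) \<and>
                (\<forall>x\<in>closure (cube R). x $ k = R \<longrightarrow> Du x $ k = 0)"
      show "integral (cube R) (\<lambda>x. exp (2 * lam * ((x $ k + r) / b) powr \<beta>) * \<bar>lap D2u x\<bar>^2)
       \<ge> C * lam^3 * \<beta>^2 * (\<beta> - 1) * b powr (-3 * \<beta>) * (r - R) powr (2 * \<beta>)
            * integral (cube R) (\<lambda>x. exp (2 * lam * ((x $ k + r) / b) powr \<beta>) * \<bar>u x\<bar>^2)
         + C * lam * (\<beta> - 1) * b powr (- \<beta>)
            * integral (cube R) (\<lambda>x. exp (2 * lam * ((x $ k + r) / b) powr \<beta>) * norm (Du x)^2)"
        using main_fixed[OF assms \<beta> lam Cpos C1 C2] H by blast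
    qed
  qed
qed

end
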